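(* Let $\Phi=(A;A^*;\{E_i\}_{i=0}^d;\{E^*_i\}_{i=0}^d)$ be a Leonard system in $\mathcal A$ with eigenvalue sequence $\theta_0,\dots,\theta_d$, dual eigenvalue sequence $\theta^*_0,\dots,\theta^*_d$ and second split sequence $\phi_1,\dots,\phi_d$. Then $$\nu=\frac{\eta_d(\theta_0)\,\eta^*_d(\theta^*_0)}{\phi_1\phi_2\cdots\phi_d},\qquad\text{i.e.}\qquad \frac{1}{\mathrm{tr}(E_0E^*_0)}=\frac{\prod_{h=1}^{d}(\theta_0-\theta_h)\prod_{h=1}^d(\theta^*_0-\theta^*_h)}{\phi_1\phi_2\cdots\phi_d}.$$
   Context: Let $\mathbb K$ be a field, $d\ge 0$ an integer, and $\mathcal A$ a $\mathbb K$-algebra isomorphic to the full matrix algebra $\mathrm{Mat}_{d+1}(\mathbb K)$; $I$ is its identity. An element of $\mathcal A$ is multiplicity-free if it has $d+1$ mutually distinct eigenvalues in $\mathbb K$. If $A$ is multiplicity-free with eigenvalues $\theta_0,\dots,\theta_d$, the primitive idempotent of $A$ associated with $\theta_i$ is $E_i=\prod_{j\ne i}(A-\theta_jI)/(\theta_i-\theta_j)$. A Leonard system in $\mathcal A$ is a sequence $\Phi=(A;A^*;\{E_i\}_{i=0}^d;\{E^*_i\}_{i=0}^d)$ such that (i) $A,A^*\in\mathcal A$ are multiplicity-free; (ii) $E_0,\dots,E_d$ is an ordering of the primitive idempotents of $A$; (iii) $E^*_0,\dots,E^*_d$ is an ordering of the primitive idempotents of $A^*$; (iv) $E_iA^*E_j=0$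 if $|i-j|>1$ and $E_iA^*E_j\ne0$ if $|i-j|=1$ ($0\le i,j\le d$); (v) $E^*_iAE^*_j=0$ if $|i-j|>1$ and $E^*_iAE^*_j\ne0$ if $|i-j|=1$ ($0\le i,j\le d$). Here $A^*$ is merely notation (not an adjoint). $\theta_i$ (resp. $\theta^*_i$) is the eigenvalue of $A$ (resp. $A^*$) associated with $E_i$ (resp. $E^*_i$). The scalar $\mathrm{tr}(E_0E^*_0)$ is nonzero and $\nu$ is its inverse. First split sequence of a Leonard system $\Psi=(B;B^*;\{F_i\};\{F^*_i\})$ with eigenvalues $\sigma_i$ (for $F_i$) and dual eigenvalues $\sigma^*_i$ (for $F^*_i$): on an irreducible module $V$, $U_i=(F^*_0V+\cdots+F^*_iV)\cap(F_iV+\cdots+F_dV)$ is $1$-dimensional and, for $1\le i\le d$, an eigenspace of $(B-\sigma_{i-1}I)(B^*-\sigma^*_iI)$ with nonzero eigenvalue, denoted $\varphi_i(\Psi)$. The second split sequence of $\Phi$ is $\phi_i=\varphi_i(\Phi^{\Downarrow})$, where $\Phi^{\Downarrow}=(A;A^*;\{E_{d-i}\}_{i=0}^d;\{E^*_i\}_{i=0}^d)$ (also a Leonard system). Polynomials: $\eta_i=\prod_{h=0}^{i-1}(\lambda-\theta_{d-h})$, $\eta^*_i=\prod_{h=0}^{i-1}(\lambda-\theta^*_{d-h})$. *)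

theory Defs
  imports "Jordan_Normal_Form.Char_Poly"
begin

text \<open>We take the algebra to be Mat_{d+1}(K) itself (represented as 'a mat in
carrier_mat (d+1) (d+1)), and its irreducible module V to be K^{d+1}.\<close>

definition mat_trace :: "'a::comm_ring_1 mat \<Rightarrow> 'a" where
  "mat_trace M = (\<Sum>i<dim_row M. M $$ (i, i))"

definition mult_free :: "nat \<Rightarrow> 'a::field mat \<Rightarrow> bool" where
  "mult_free d A \<longleftrightarrow> A \<in> carrier_mat (Suc d) (Suc d) \<and>
     (\<exists>th::nat \<Rightarrow> 'a. inj_on th {0..d} \<and> (\<forall>i\<le>d. eigenvalue A (th i)))"

definition prim_idem :: "nat \<Rightarrow> 'a::field mat \<Rightarrow> (nat \<Rightarrow> 'a) \<Rightarrow> nat \<Rightarrow> 'a mat" where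
  "prim_idem d A th i =
     foldr (\<lambda>j M. ((1 / (th i - th j)) \<cdot>\<^sub>m (A - th j \<cdot>\<^sub>m 1\<^sub>m (Suc d))) * M)
       (filter (\<lambda>j. j \<noteq> i) [0..<Suc d]) (1\<^sub>m (Suc d))"

definition idem_ordering :: "nat \<Rightarrow> 'a::field mat \<Rightarrow> (nat \<Rightarrow> 'a mat) \<Rightarrow> bool" where
  "idem_ordering d A E \<longleftrightarrow>
     (\<exists>th::nat \<Rightarrow> 'a. inj_on th {0..d} \<and> (\<forall>i\<le>d. eigenvalue A (th i)) \<and>
        (\<forall>i\<le>d. E i = prim_idem d A th i))"

definition leonard_system ::
  "nat \<Rightarrow> 'a::field mat \<Rightarrow> 'a mat \<Rightarrow> (nat \<Rightarrow> 'a mat) \<Rightarrow> (nat \<Rightarrow> 'a mat) \<Rightarrow> bool" where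
  "leonard_system d A As E Es \<longleftrightarrow>
     mult_free d A \<and> mult_free d As \<and> idem_ordering d A E \<and> idem_ordering d As Es \<and>
     (\<forall>i\<le>d. \<forall>j\<le>d. (i > j + 1 \<or> j > i + 1) \<longrightarrow> E i * As * E j = 0\<^sub>m (Suc d) (Suc d)) \<and>
     (\<forall>i\<le>d. \<forall>j\<le>d. (i = j + 1 \<or> j = i + 1) \<longrightarrow> E i * As * E j \<noteq> 0\<^sub>m (Suc d) (Suc d)) \<and>
     (\<forall>i\<le>d. \<forall>j\<le>d. (i > j + 1 \<or> j > i + 1) \<longrightarrow> Es i * A * Es j = 0\<^sub>m (Suc d) (Suc d)) \<and>
     (\<forall>i\<le>d. \<forall>j\<le>d. (i = j + 1 \<or> j = i + 1) \<longrightarrow> Es i * A * Es j \<noteq> 0\<^sub>m (Suc d) (Suc d))"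

definition assoc_eigenvalues :: "nat \<Rightarrow> 'a::field mat \<Rightarrow> (nat \<Rightarrow> 'a mat) \<Rightarrow> (nat \<Rightarrow> 'a) \<Rightarrow> bool" where
  "assoc_eigenvalues d A E th \<longleftrightarrow> (\<forall>i\<le>d. A * E i = th i \<cdot>\<^sub>m E i)"

definition sum_images :: "nat \<Rightarrow> (nat \<Rightarrow> 'a::field mat) \<Rightarrow> nat list \<Rightarrow> 'a vec set" where
  "sum_images d F hs = {foldr (\<lambda>h acc. F h *\<^sub>v v h + acc) hs (0\<^sub>v (Suc d)) | v.
       \<forall>h. v h \<in> carrier_vec (Suc d)}"

definition split_space ::
  "nat \<Rightarrow> (nat \<Rightarrow> 'a::field mat) \<Rightarrow> (nat \<Rightarrow> 'a mat) \<Rightarrow> nat \<Rightarrow> 'a vec set" where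
  "split_space d F Fs i = sum_images d Fs [0..<Suc i] \<inter> sum_images d F [i..<Suc d]"

definition split_seq ::
  "nat \<Rightarrow> 'a::field mat \<Rightarrow> 'a mat \<Rightarrow> (nat \<Rightarrow> 'a mat) \<Rightarrow> (nat \<Rightarrow> 'a mat) \<Rightarrow>
   (nat \<Rightarrow> 'a) \<Rightarrow> (nat \<Rightarrow> 'a) \<Rightarrow> nat \<Rightarrow> 'a" where
  "split_seq d B Bs F Fs sg sgs i =
     (THE c. \<forall>u \<in> split_space d F Fs i.
        ((B - sg (i - 1) \<cdot>\<^sub>m 1\<^sub>m (Suc d)) * (Bs - sgs i \<cdot>\<^sub>m 1\<^sub>m (Suc d))) *\<^sub>v u = c \<cdot>\<^sub>v u)"

text \<open>Second split sequence: first split sequence of Phi-down = (A; As; E (d-i); Es i),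
  whose eigenvalue sequence is th (d-i).\<close>
definition second_split_seq ::
  "nat \<Rightarrow> 'a::field mat \<Rightarrow> 'a mat \<Rightarrow> (nat \<Rightarrow> 'a mat) \<Rightarrow> (nat \<Rightarrow> 'a mat) \<Rightarrow>
   (nat \<Rightarrow> 'a) \<Rightarrow> (nat \<Rightarrow> 'a) \<Rightarrow> nat \<Rightarrow> 'a" where
  "second_split_seq d A As E Es th ths i =
     split_seq d A As (\<lambda>j. E (d - j)) Es (\<lambda>j. th (d - j)) ths i"

end

theory Submission imports Defs begin

definition dmat :: "nat \<Rightarrow> (nat \<Rightarrow> 'a::field) \<Rightarrow> 'a mat" where
  "dmat n f = mat n n (\<lambda>(i,j). if i = j then f i else 0)"

lemma dmat_carrier[simp]: "dmat n f \<in> carrier_mat n n"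
  by (simp add: dmat_def)

lemma dmat_vec: assumes "v \<in> carrier_vec n"
  shows "dmat n f *\<^sub>v v = vec n (\<lambda>k. f k * v $ k)"
proof (rule eq_vecI)
  fix i assume i: "i < dim_vec (vec n (\<lambda>k. f k * v $ k))"
  hence i: "i < n" by simp
  have "(dmat n f *\<^sub>v v) $ i = (\<Sum>j<n. (if i = j then f i else 0) * v $ j)"
    using i assms unfolding dmat_def mult_mat_vec_def scalar_prod_def
    by (auto simp: row_def intro!: sum.cong)
  also have "\<dots> = (\<Sum>j<n. if j = i then f i * v $ i else 0)"
    by (rule sum.cong) auto
  also have "\<dots> = f i * v $ i"
    using i by simp
  finally show "(dmat n f *\<^sub>v v) $ i = vec n (\<lambda>k. f k * v $ k) $ i" using i by simp
qed (simp add: dmat_def)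


lemma S_vec: assumes M: "(M::'a::field mat) \<in> carrier_mat n n" and w: "w \<in> carrier_vec n"
  shows "(a \<cdot>\<^sub>m (M - b \<cdot>\<^sub>m 1\<^sub>m n)) *\<^sub>v w = a \<cdot>\<^sub>v (M *\<^sub>v w - b \<cdot>\<^sub>v w)"
proof -
  have "(M - b \<cdot>\<^sub>m 1\<^sub>m n) *\<^sub>v w = M *\<^sub>v w - (b \<cdot>\<^sub>m 1\<^sub>m n) *\<^sub>v w"
    using M w by (intro minus_mult_distrib_mat_vec) auto
  also have "(b \<cdot>\<^sub>m 1\<^sub>m n) *\<^sub>v w = b \<cdot>\<^sub>v w"
    using w by (intro eq_vecI) (auto simp: mult_mat_vec_def)
  finally have 1: "(M - b \<cdot>\<^sub>m 1\<^sub>m n) *\<^sub>v w = M *\<^sub>v w - b \<cdot>\<^sub>v w" .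
  have "(a \<cdot>\<^sub>m (M - b \<cdot>\<^sub>m 1\<^sub>m n)) *\<^sub>v w = a \<cdot>\<^sub>v ((M - b \<cdot>\<^sub>m 1\<^sub>m n) *\<^sub>v w)"
    using M w by (intro eq_vecI) (auto simp: mult_mat_vec_def scalar_prod_def sum_distrib_left ac_simps)
  with 1 show ?thesis by simp
qed

lemma MP_vec: assumes M: "M \<in> carrier_mat n n" and P: "P \<in> carrier_mat n n"
  and MP: "M * P = P * dmat n f" and z: "z \<in> carrier_vec n"
  shows "M *\<^sub>v (P *\<^sub>v z) = P *\<^sub>v vec n (\<lambda>k. f k * z $ k)"
proof -
  have "M *\<^sub>v (P *\<^sub>v z) = (M * P) *\<^sub>v z" using M P z by simp
  also have "\<dots> = (P * dmat n f) *\<^sub>v z" using MP by simp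
  also have "\<dots> = P *\<^sub>v (dmat n f *\<^sub>v z)" using P z by (intro assoc_mult_mat_vec) auto
  finally show ?thesis using z by (simp add: dmat_vec)
qed

lemma Pv_lin: assumes P: "(P::'a::field mat) \<in> carrier_mat n n"
  shows "a \<cdot>\<^sub>v (P *\<^sub>v vec n g - b \<cdot>\<^sub>v (P *\<^sub>v vec n h)) = P *\<^sub>v vec n (\<lambda>k. a * (g k - b * h k))"
proof -
  have c1: "vec n g \<in> carrier_vec n" "vec n h \<in> carrier_vec n" "b \<cdot>\<^sub>v vec n h \<in> carrier_vec n" by auto
  have "P *\<^sub>v vec n (\<lambda>k. a * (g k - b * h k)) = P *\<^sub>v (a \<cdot>\<^sub>v (vec n g - b \<cdot>\<^sub>v vec n h))"
    by (intro arg_cong[where f="\<lambda>x. P *\<^sub>v x"] eq_vecI) (auto simp: algebra_simps)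
  also have "\<dots> = a \<cdot>\<^sub>v (P *\<^sub>v (vec n g - b \<cdot>\<^sub>v vec n h))"
    using mult_mat_vec[OF P, of "vec n g - b \<cdot>\<^sub>v vec n h" a] by simp
  also have "P *\<^sub>v (vec n g - b \<cdot>\<^sub>v vec n h) = P *\<^sub>v vec n g - P *\<^sub>v (b \<cdot>\<^sub>v vec n h)"
    using mult_minus_distrib_mat_vec[OF P c1(1) c1(3)] .
  also have "P *\<^sub>v (b \<cdot>\<^sub>v vec n h) = b \<cdot>\<^sub>v (P *\<^sub>v vec n h)"
    using mult_mat_vec[OF P c1(2)] .
  finally show ?thesis by simp
qed

lemma foldr_P:
  assumes M: "(M::'a::field mat) \<in> carrier_mat n n" and P: "P \<in> carrier_mat n n"
  and MP: "M * P = P * dmat n f" and z: "z \<in> carrier_vec n"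
  shows "foldr (\<lambda>j N. (a j \<cdot>\<^sub>m (M - b j \<cdot>\<^sub>m 1\<^sub>m n)) * N) js (1\<^sub>m n) \<in> carrier_mat n n \<and>
    foldr (\<lambda>j N. (a j \<cdot>\<^sub>m (M - b j \<cdot>\<^sub>m 1\<^sub>m n)) * N) js (1\<^sub>m n) *\<^sub>v (P *\<^sub>v z) =
    P *\<^sub>v vec n (\<lambda>k. prod_list (map (\<lambda>j. a j * (f k - b j)) js) * z $ k)"
proof (induction js)
  case Nil
  have "P *\<^sub>v z = P *\<^sub>v vec n (\<lambda>k. z $ k)"
    using z by (intro arg_cong[where f="\<lambda>x. P *\<^sub>v x"] eq_vecI) auto
  then show ?case using P z by simp
next
  case (Cons j js)
  let ?F = "foldr (\<lambda>j N. (a j \<cdot>\<^sub>m (M - b j \<cdot>\<^sub>m 1\<^sub>m n)) * N) js (1\<^sub>m n)"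
  let ?z = "vec n (\<lambda>k. prod_list (map (\<lambda>j. a j * (f k - b j)) js) * z $ k)"
  have F: "?F \<in> carrier_mat n n" and Fz: "?F *\<^sub>v (P *\<^sub>v z) = P *\<^sub>v ?z" using Cons by auto
  have S: "a j \<cdot>\<^sub>m (M - b j \<cdot>\<^sub>m 1\<^sub>m n) \<in> carrier_mat n n" using M by auto
  have "(a j \<cdot>\<^sub>m (M - b j \<cdot>\<^sub>m 1\<^sub>m n) * ?F) *\<^sub>v (P *\<^sub>v z) = (a j \<cdot>\<^sub>m (M - b j \<cdot>\<^sub>m 1\<^sub>m n)) *\<^sub>v (P *\<^sub>v ?z)"
    using assoc_mult_mat_vec[OF S F, of "P *\<^sub>v z"] P z Fz by simp
  also have "\<dots> = a j \<cdot>\<^sub>v (M *\<^sub>v (P *\<^sub>v ?z) - b j \<cdot>\<^sub>v (P *\<^sub>v ?z))"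
    using M P by (intro S_vec) simp_all
  also have "\<dots> = a j \<cdot>\<^sub>v (P *\<^sub>v vec n (\<lambda>k. f k * ?z $ k) - b j \<cdot>\<^sub>v (P *\<^sub>v ?z))"
    using MP_vec[OF M P MP, of ?z] by (simp only: vec_carrier)
  also have "\<dots> = P *\<^sub>v vec n (\<lambda>k. a j * (f k * ?z $ k - b j * (prod_list (map (\<lambda>j. a j * (f k - b j)) js) * z $ k)))"
    by (rule Pv_lin[OF P])
  also have "\<dots> = P *\<^sub>v vec n (\<lambda>k. prod_list (map (\<lambda>j. a j * (f k - b j)) (j # js)) * z $ k)"
    by (intro arg_cong[where f="\<lambda>x. P *\<^sub>v x"] eq_vecI) (auto simp: algebra_simps)
  finally show ?case using S F by simp
qed


lemma smult_zero_cancel: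
  assumes "(c::'a::field) \<cdot>\<^sub>v v = 0\<^sub>v n" "v \<in> carrier_vec n" "v \<noteq> 0\<^sub>v n"
  shows "c = 0"
proof (rule ccontr)
  assume c: "c \<noteq> 0"
  have "v = 0\<^sub>v n"
  proof (rule eq_vecI)
    fix r assume "r < dim_vec (0\<^sub>v n :: 'a vec)"
    hence r: "r < n" by simp
    have "c * v $ r = 0" using arg_cong[OF assms(1), of "\<lambda>x. x $ r"] r assms(2) by simp
    then show "v $ r = 0\<^sub>v n $ r" using c r by simp
  qed (use assms in auto)
  with assms(3) show False by simp
qed

lemma prod_list_ones: "(\<forall>x \<in> set xs. x = 1) \<Longrightarrow> prod_list xs = (1::'a::monoid_mult)"
  by (induct xs) auto

lemma lagr:
  fixes f :: "nat \<Rightarrow> 'a::field"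
  assumes inj: "inj_on f {0..d}" and i: "i \<le> d" and k: "k \<le> d"
  shows "prod_list (map (\<lambda>j. 1 / (f i - f j) * (f k - f j)) (filter (\<lambda>j. j \<noteq> i) [0..<Suc d]))
     = (if k = i then 1 else 0)"
proof (cases "k = i")
  case True
  have "\<forall>x \<in> set (map (\<lambda>j. 1 / (f i - f j) * (f k - f j)) (filter (\<lambda>j. j \<noteq> i) [0..<Suc d])). x = 1"
  proof
    fix x assume "x \<in> set (map (\<lambda>j. 1 / (f i - f j) * (f k - f j)) (filter (\<lambda>j. j \<noteq> i) [0..<Suc d]))"
    then obtain j where j: "j < Suc d" "j \<noteq> i" and x: "x = 1 / (f i - f j) * (f k - f j)"
      by (auto simp del: upt_Suc)
    have "f i \<noteq> f j" using inj j i by (auto simp: less_Suc_eq_le dest: inj_onD)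
    then show "x = 1" using x True by simp
  qed
  then show ?thesis using True prod_list_ones by metis
next
  case False
  have "0 \<in> set (map (\<lambda>j. 1 / (f i - f j) * (f k - f j)) (filter (\<lambda>j. j \<noteq> i) [0..<Suc d]))"
    using False k by (auto simp del: upt_Suc intro!: image_eqI[where x=k])
  then show ?thesis using False by (simp add: prod_list_zero_iff)
qed

lemma spectral_exists:
  fixes M :: "'a::field mat"
  assumes M: "M \<in> carrier_mat (Suc d) (Suc d)" and inj: "inj_on f {0..d}"
    and ev: "\<forall>i\<le>d. eigenvalue M (f i)"
  shows "\<exists>P Q. P \<in> carrier_mat (Suc d) (Suc d) \<and> Q \<in> carrier_mat (Suc d) (Suc d) \<and>
    P * Q = 1\<^sub>m (Suc d) \<and> Q * P = 1\<^sub>m (Suc d) \<and> M * P = P * dmat (Suc d) f"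
proof -
  define n where "n = Suc d"
  have "\<forall>i. \<exists>w. i \<le> d \<longrightarrow> eigenvector M w (f i)" using ev unfolding eigenvalue_def by blast
  then obtain v where v: "\<And>i. i \<le> d \<Longrightarrow> eigenvector M (v i) (f i)" by metis
  have vc: "v i \<in> carrier_vec n" and vnz: "v i \<noteq> 0\<^sub>v n" and Mv: "M *\<^sub>v v i = f i \<cdot>\<^sub>v v i"
    if "i \<le> d" for i
    using v[OF that] M unfolding eigenvector_def n_def by auto
  define P where "P = mat n n (\<lambda>(r,c). v c $ r)"
  have P: "P \<in> carrier_mat n n" unfolding P_def by simp
  have Mn: "M \<in> carrier_mat n n" using M n_def by simp
  have colP: "col P c = v c" if "c < n" for c
    using vc[of c] that unfolding P_def n_def by (intro eq_vecI) auto
  have MP: "M * P = P * dmat n f"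
  proof (rule eq_matI)
    fix r c assume r: "r < dim_row (P * dmat n f)" and c: "c < dim_col (P * dmat n f)"
    hence r: "r < n" and c: "c < n" using P by (auto simp: dmat_def)
    have "(M * P) $$ (r, c) = (M *\<^sub>v v c) $ r"
      using r c Mn P colP[OF c] by (simp add: mult_mat_vec_def)
    also have "\<dots> = f c * v c $ r" using Mv[of c] c r vc[of c] n_def by simp
    also have "\<dots> = (P * dmat n f) $$ (r, c)"
    proof -
      have "(P * dmat n f) $$ (r, c) = (\<Sum>k<n. v k $ r * (if k = c then f c else 0))"
        using r c P unfolding P_def dmat_def
        by (auto simp: scalar_prod_def lessThan_atLeast0 intro!: sum.cong)
      also have "\<dots> = (\<Sum>k<n. if k = c then v c $ r * f c else 0)"
        by (rule sum.cong) auto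
      finally show ?thesis using c by simp
    qed
    finally show "(M * P) $$ (r, c) = (P * dmat n f) $$ (r, c)" .
  qed (use P Mn in \<open>auto simp: dmat_def\<close>)
  have detP: "det P \<noteq> 0"
  proof
    assume "det P = 0"
    then obtain y where y: "y \<in> carrier_vec n" "y \<noteq> 0\<^sub>v n" "P *\<^sub>v y = 0\<^sub>v n"
      using det_0_iff_vec_prod_zero_field[OF P] by blast
    have "y $ i = 0" if i: "i \<le> d" for i
    proof -
      let ?F = "prim_idem d M f i"
      have FP: "?F \<in> carrier_mat n n \<and> ?F *\<^sub>v (P *\<^sub>v y) = P *\<^sub>v vec n (\<lambda>k.
          prod_list (map (\<lambda>j. 1 / (f i - f j) * (f k - f j)) (filter (\<lambda>j. j \<noteq> i) [0..<Suc d])) * y $ k)"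
        unfolding prim_idem_def n_def foldr_map[symmetric]
        using foldr_P[OF Mn[unfolded n_def] P[unfolded n_def] MP[unfolded n_def] y(1)[unfolded n_def],
            of "\<lambda>j. 1 / (f i - f j)" f "filter (\<lambda>j. j \<noteq> i) [0..<Suc d]"]
        by (simp add: foldr_map o_def)
      have "vec n (\<lambda>k. prod_list (map (\<lambda>j. 1 / (f i - f j) * (f k - f j)) (filter (\<lambda>j. j \<noteq> i) [0..<Suc d])) * y $ k)
          = vec n (\<lambda>k. if k = i then y $ i else 0)"
        using lagr[OF inj i] by (intro eq_vecI) (auto simp: n_def)
      moreover have "P *\<^sub>v vec n (\<lambda>k. if k = i then y $ i else 0) = y $ i \<cdot>\<^sub>v v i"
      proof (rule eq_vecI)
        fix r assume "r < dim_vec (y $ i \<cdot>\<^sub>v v i)"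
        hence r: "r < n" using vc[OF i] by simp
        have "(P *\<^sub>v vec n (\<lambda>k. if k = i then y $ i else 0)) $ r = (\<Sum>k<n. v k $ r * (if k = i then y $ i else 0))"
          using r P unfolding P_def by (auto simp: scalar_prod_def lessThan_atLeast0 intro!: sum.cong)
        also have "\<dots> = (\<Sum>k<n. if k = i then v i $ r * y $ i else 0)"
          by (rule sum.cong) auto
        also have "\<dots> = y $ i * v i $ r" using i by (simp add: n_def)
        finally show "(P *\<^sub>v vec n (\<lambda>k. if k = i then y $ i else 0)) $ r = (y $ i \<cdot>\<^sub>v v i) $ r"
          using r vc[OF i] by simp
      qed (use P vc[OF i] in auto)
      moreover have "?F *\<^sub>v (P *\<^sub>v y) = 0\<^sub>v n"
      proof -
        have "?F *\<^sub>v 0\<^sub>v n = 0\<^sub>v n" using FP by (intro eq_vecI) auto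
        then show ?thesis using y(3) by simp
      qed
      ultimately have "y $ i \<cdot>\<^sub>v v i = 0\<^sub>v n" using FP by simp
      then show ?thesis using vnz[OF i] vc[OF i] smult_zero_cancel by blast
    qed
    then have "y = 0\<^sub>v n" using y(1) by (intro eq_vecI) (auto simp: n_def)
    with y(2) show False by simp
  qed
  have "P \<in> Units (ring_mat TYPE('a) n ())" by (rule det_non_zero_imp_unit[OF P detP])
  then obtain Q where Q: "Q \<in> carrier_mat n n" "Q * P = 1\<^sub>m n" "P * Q = 1\<^sub>m n"
    unfolding Units_def ring_mat_def by auto
  show ?thesis using P Q MP unfolding n_def by blast
qed


lemma Pvec_delta: assumes P: "(P::'a::field mat) \<in> carrier_mat n n" and i: "i < n"
  shows "P *\<^sub>v vec n (\<lambda>k. if k = i then c else 0) = c \<cdot>\<^sub>v col P i"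
proof (rule eq_vecI)
  fix r assume "r < dim_vec (c \<cdot>\<^sub>v col P i)"
  hence r: "r < n" using P by simp
  have "(P *\<^sub>v vec n (\<lambda>k. if k = i then c else 0)) $ r = (\<Sum>k<n. P $$ (r, k) * (if k = i then c else 0))"
    using r P by (auto simp: scalar_prod_def lessThan_atLeast0 intro!: sum.cong)
  also have "\<dots> = (\<Sum>k<n. if k = i then P $$ (r, i) * c else 0)"
    by (rule sum.cong) auto
  also have "\<dots> = c * P $$ (r, i)" using i by simp
  finally show "(P *\<^sub>v vec n (\<lambda>k. if k = i then c else 0)) $ r = (c \<cdot>\<^sub>v col P i) $ r"
    using r P i by simp
qed (use P in auto)

lemma mat_zero_if_mult_zero:
  assumes N: "(N::'a::field mat) \<in> carrier_mat n m" and z: "\<And>y. y \<in> carrier_vec m \<Longrightarrow> N *\<^sub>v y = 0\<^sub>v n"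
  shows "N = 0\<^sub>m n m"
proof (rule eq_matI)
  fix r c assume r: "r < dim_row (0\<^sub>m n m :: 'a mat)" and c: "c < dim_col (0\<^sub>m n m :: 'a mat)"
  hence r: "r < n" and c: "c < m" by auto
  have "N $$ (r, c) = (N *\<^sub>v unit_vec m c) $ r" using N r c by simp
  also have "\<dots> = 0" using z[of "unit_vec m c"] r by simp
  finally show "N $$ (r, c) = 0\<^sub>m n m $$ (r, c)" using r c by simp
qed (use N in auto)

locale spec =
  fixes d :: nat and M P Q :: "'a::field mat" and f :: "nat \<Rightarrow> 'a"
  assumes M: "M \<in> carrier_mat (Suc d) (Suc d)" and P: "P \<in> carrier_mat (Suc d) (Suc d)"
    and Q: "Q \<in> carrier_mat (Suc d) (Suc d)" and PQ: "P * Q = 1\<^sub>m (Suc d)" and QP: "Q * P = 1\<^sub>m (Suc d)"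
    and MP: "M * P = P * dmat (Suc d) f" and inj: "inj_on f {0..d}"
begin

lemma recon: "x \<in> carrier_vec (Suc d) \<Longrightarrow> P *\<^sub>v (Q *\<^sub>v x) = x"
  using assoc_mult_mat_vec[OF P Q, of x] PQ by simp

lemma QP_vec: "z \<in> carrier_vec (Suc d) \<Longrightarrow> Q *\<^sub>v (P *\<^sub>v z) = z"
  using assoc_mult_mat_vec[OF Q P, of z] QP by simp

lemma Qinj: "x \<in> carrier_vec (Suc d) \<Longrightarrow> y \<in> carrier_vec (Suc d) \<Longrightarrow> Q *\<^sub>v x = Q *\<^sub>v y \<Longrightarrow> x = y"
proof -
  assume x: "x \<in> carrier_vec (Suc d)" and y: "y \<in> carrier_vec (Suc d)" and e: "Q *\<^sub>v x = Q *\<^sub>v y"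
  have "x = P *\<^sub>v (Q *\<^sub>v x)" using recon[OF x] by simp
  also have "\<dots> = P *\<^sub>v (Q *\<^sub>v y)" using e by simp
  also have "\<dots> = y" using recon[OF y] by simp
  finally show ?thesis .
qed

lemma Qzero: "x \<in> carrier_vec (Suc d) \<Longrightarrow> Q *\<^sub>v x = 0\<^sub>v (Suc d) \<Longrightarrow> x = 0\<^sub>v (Suc d)"
proof -
  have "Q *\<^sub>v 0\<^sub>v (Suc d) = 0\<^sub>v (Suc d)" using Q by (intro eq_vecI) auto
  then show "x \<in> carrier_vec (Suc d) \<Longrightarrow> Q *\<^sub>v x = 0\<^sub>v (Suc d) \<Longrightarrow> x = 0\<^sub>v (Suc d)"
    using Qinj[of x "0\<^sub>v (Suc d)"] by auto
qed

lemma QcolP: "j < Suc d \<Longrightarrow> Q *\<^sub>v col P j = unit_vec (Suc d) j"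
  using col_mult2[OF Q P, of j] QP by simp

lemma colP_carrier[simp]: "col P j \<in> carrier_vec (Suc d)"
  using P unfolding col_def by auto

lemma colP_nz: "j < Suc d \<Longrightarrow> col P j \<noteq> 0\<^sub>v (Suc d)"
proof
  assume j: "j < Suc d" and "col P j = 0\<^sub>v (Suc d)"
  then have "Q *\<^sub>v col P j = 0\<^sub>v (Suc d)" using Q by auto
  moreover have "unit_vec (Suc d) j $ j = (1::'a)" using j by simp
  ultimately have "(0::'a) = 1" using QcolP[OF j] j by simp
  then show False by simp
qed

lemma coordM: assumes x: "x \<in> carrier_vec (Suc d)"
  shows "Q *\<^sub>v (M *\<^sub>v x) = vec (Suc d) (\<lambda>k. f k * (Q *\<^sub>v x) $ k)"
proof -
  have "M *\<^sub>v x = M *\<^sub>v (P *\<^sub>v (Q *\<^sub>v x))" using recon[OF x] by simp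
  also have "\<dots> = P *\<^sub>v vec (Suc d) (\<lambda>k. f k * (Q *\<^sub>v x) $ k)"
    using MP_vec[OF M P MP, of "Q *\<^sub>v x"] Q x by simp
  finally show ?thesis using QP_vec by simp
qed

lemma coordR: assumes x: "x \<in> carrier_vec (Suc d)"
  shows "Q *\<^sub>v ((M - c \<cdot>\<^sub>m 1\<^sub>m (Suc d)) *\<^sub>v x) = vec (Suc d) (\<lambda>k. (f k - c) * (Q *\<^sub>v x) $ k)"
proof -
  have "1 \<cdot>\<^sub>m (M - c \<cdot>\<^sub>m 1\<^sub>m (Suc d)) = M - c \<cdot>\<^sub>m 1\<^sub>m (Suc d)" using M by (intro eq_matI) auto
  then have "(M - c \<cdot>\<^sub>m 1\<^sub>m (Suc d)) *\<^sub>v x = (1 \<cdot>\<^sub>m (M - c \<cdot>\<^sub>m 1\<^sub>m (Suc d))) *\<^sub>v x" by simp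
  also have "\<dots> = 1 \<cdot>\<^sub>v (M *\<^sub>v x - c \<cdot>\<^sub>v x)" by (rule S_vec[OF M x])
  finally have e: "(M - c \<cdot>\<^sub>m 1\<^sub>m (Suc d)) *\<^sub>v x = M *\<^sub>v x - c \<cdot>\<^sub>v x" by simp
  have "Q *\<^sub>v (M *\<^sub>v x - c \<cdot>\<^sub>v x) = Q *\<^sub>v (M *\<^sub>v x) - Q *\<^sub>v (c \<cdot>\<^sub>v x)"
    using M x by (intro mult_minus_distrib_mat_vec[OF Q]) auto
  also have "Q *\<^sub>v (c \<cdot>\<^sub>v x) = c \<cdot>\<^sub>v (Q *\<^sub>v x)" by (rule mult_mat_vec[OF Q x])
  finally show ?thesis unfolding e coordM[OF x] using Q x
    by (intro eq_vecI) (auto simp: algebra_simps)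
qed

lemma prim_vec: assumes i: "i \<le> d" and x: "x \<in> carrier_vec (Suc d)"
  shows "prim_idem d M f i \<in> carrier_mat (Suc d) (Suc d)"
    "prim_idem d M f i *\<^sub>v x = (Q *\<^sub>v x) $ i \<cdot>\<^sub>v col P i"
proof -
  have FP: "prim_idem d M f i \<in> carrier_mat (Suc d) (Suc d) \<and> prim_idem d M f i *\<^sub>v (P *\<^sub>v (Q *\<^sub>v x)) =
      P *\<^sub>v vec (Suc d) (\<lambda>k. prod_list (map (\<lambda>j. 1 / (f i - f j) * (f k - f j)) (filter (\<lambda>j. j \<noteq> i) [0..<Suc d]))
         * (Q *\<^sub>v x) $ k)"
    unfolding prim_idem_def
    using foldr_P[OF M P MP, of "Q *\<^sub>v x" "\<lambda>j. 1 / (f i - f j)" f "filter (\<lambda>j. j \<noteq> i) [0..<Suc d]"] Q x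
    by (simp del: upt_Suc)
  then show "prim_idem d M f i \<in> carrier_mat (Suc d) (Suc d)" by simp
  have "vec (Suc d) (\<lambda>k. prod_list (map (\<lambda>j. 1 / (f i - f j) * (f k - f j)) (filter (\<lambda>j. j \<noteq> i) [0..<Suc d]))
         * (Q *\<^sub>v x) $ k) = vec (Suc d) (\<lambda>k. if k = i then (Q *\<^sub>v x) $ i else 0)"
    using lagr[OF inj i] by (intro eq_vecI) (auto simp del: upt_Suc)
  then show "prim_idem d M f i *\<^sub>v x = (Q *\<^sub>v x) $ i \<cdot>\<^sub>v col P i"
    using FP recon[OF x] Pvec_delta[OF P, of i] i by simp
qed

lemma Mcol: "j < Suc d \<Longrightarrow> M *\<^sub>v col P j = f j \<cdot>\<^sub>v col P j"
proof -
  assume j: "j < Suc d"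
  have "Q *\<^sub>v (M *\<^sub>v col P j) = Q *\<^sub>v (f j \<cdot>\<^sub>v col P j)"
    unfolding coordM[OF colP_carrier] mult_mat_vec[OF Q colP_carrier] QcolP[OF j]
    using j by (intro eq_vecI) auto
  moreover have "M *\<^sub>v col P j \<in> carrier_vec (Suc d)" using mult_mat_vec_carrier[OF M colP_carrier] .
  moreover have "f j \<cdot>\<^sub>v col P j \<in> carrier_vec (Suc d)" by simp
  ultimately show ?thesis using Qinj by blast
qed

lemma conj_entry: assumes X: "X \<in> carrier_mat (Suc d) (Suc d)" and x: "x \<in> carrier_vec (Suc d)"
  shows "Q *\<^sub>v (X *\<^sub>v x) = (Q * X * P) *\<^sub>v (Q *\<^sub>v x)"
    "l < Suc d \<Longrightarrow> k < Suc d \<Longrightarrow> (Q * X * P) $$ (l, k) = (Q *\<^sub>v (X *\<^sub>v col P k)) $ l"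
proof -
  have QX: "Q * X \<in> carrier_mat (Suc d) (Suc d)" using Q X by simp
  have Qx: "Q *\<^sub>v x \<in> carrier_vec (Suc d)" using mult_mat_vec_carrier[OF Q x] .
  have PQx: "P *\<^sub>v (Q *\<^sub>v x) \<in> carrier_vec (Suc d)" using mult_mat_vec_carrier[OF P Qx] .
  have "(Q * X * P) *\<^sub>v (Q *\<^sub>v x) = (Q * X) *\<^sub>v (P *\<^sub>v (Q *\<^sub>v x))"
    by (rule assoc_mult_mat_vec[OF QX P Qx])
  also have "\<dots> = Q *\<^sub>v (X *\<^sub>v (P *\<^sub>v (Q *\<^sub>v x)))"
    by (rule assoc_mult_mat_vec[OF Q X PQx])
  finally show "Q *\<^sub>v (X *\<^sub>v x) = (Q * X * P) *\<^sub>v (Q *\<^sub>v x)" unfolding recon[OF x] by simp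
  assume l: "l < Suc d" and k: "k < Suc d"
  have QXP: "Q * X * P \<in> carrier_mat (Suc d) (Suc d)" using QX P by simp
  have dims: "dim_row (Q * X * P) = Suc d" "dim_col (Q * X * P) = Suc d" using QXP by auto
  have "(Q * X * P) $$ (l, k) = col (Q * X * P) k $ l" using l k dims by simp
  also have "col (Q * X * P) k = (Q * X) *\<^sub>v col P k" by (rule col_mult2[OF QX P k])
  also have "\<dots> = Q *\<^sub>v (X *\<^sub>v col P k)" by (rule assoc_mult_mat_vec[OF Q X colP_carrier])
  finally show "(Q * X * P) $$ (l, k) = (Q *\<^sub>v (X *\<^sub>v col P k)) $ l" .
qed

lemma coord_sum: assumes X: "X \<in> carrier_mat (Suc d) (Suc d)" and x: "x \<in> carrier_vec (Suc d)" and l: "l < Suc d"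
  shows "(Q *\<^sub>v (X *\<^sub>v x)) $ l = (\<Sum>k<Suc d. (Q * X * P) $$ (l, k) * (Q *\<^sub>v x) $ k)"
proof -
  have QXP: "Q * X * P \<in> carrier_mat (Suc d) (Suc d)" using Q X P by simp
  have Qx: "Q *\<^sub>v x \<in> carrier_vec (Suc d)" using mult_mat_vec_carrier[OF Q x] .
  have "(Q *\<^sub>v (X *\<^sub>v x)) $ l = row (Q * X * P) l \<bullet> (Q *\<^sub>v x)"
    unfolding conj_entry(1)[OF X x] using Q l by (intro index_mult_mat_vec) simp
  also have "\<dots> = (\<Sum>k<Suc d. (Q * X * P) $$ (l, k) * (Q *\<^sub>v x) $ k)"
  proof -
    have dv: "dim_vec (Q *\<^sub>v x) = Suc d" using Q by simp
    show ?thesis unfolding scalar_prod_def dv lessThan_atLeast0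
    proof (rule sum.cong)
      fix k assume "k \<in> {0..<Suc d}"
      hence k: "k < Suc d" by simp
      have dims: "dim_row (Q * X * P) = Suc d" "dim_col (Q * X * P) = Suc d" using QXP by auto
      show "row (Q * X * P) l $ k * (Q *\<^sub>v x) $ k = (Q * X * P) $$ (l, k) * (Q *\<^sub>v x) $ k"
        using index_row(1)[of l "Q * X * P" k] dims l k by simp
    qed simp
  qed
  finally show ?thesis .
qed


lemma N_apply: assumes i: "i \<le> d" and j: "j \<le> d" and X: "X \<in> carrier_mat (Suc d) (Suc d)"
  and y: "y \<in> carrier_vec (Suc d)"
  shows "(prim_idem d M f i * X * prim_idem d M f j) *\<^sub>v y =
     (Q *\<^sub>v y) $ j \<cdot>\<^sub>v ((Q *\<^sub>v (X *\<^sub>v col P j)) $ i \<cdot>\<^sub>v col P i)"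
proof -
  have Ei: "prim_idem d M f i \<in> carrier_mat (Suc d) (Suc d)" using prim_vec(1)[OF i y] .
  have Ej: "prim_idem d M f j \<in> carrier_mat (Suc d) (Suc d)" using prim_vec(1)[OF j y] .
  have EX: "prim_idem d M f i * X \<in> carrier_mat (Suc d) (Suc d)" using Ei X by simp
  have Ejy: "prim_idem d M f j *\<^sub>v y \<in> carrier_vec (Suc d)" using mult_mat_vec_carrier[OF Ej y] .
  have XP: "X *\<^sub>v col P j \<in> carrier_vec (Suc d)" using mult_mat_vec_carrier[OF X colP_carrier] .
  have "(prim_idem d M f i * X * prim_idem d M f j) *\<^sub>v y = (prim_idem d M f i * X) *\<^sub>v (prim_idem d M f j *\<^sub>v y)"
    by (rule assoc_mult_mat_vec[OF EX Ej y])
  also have "\<dots> = prim_idem d M f i *\<^sub>v (X *\<^sub>v (prim_idem d M f j *\<^sub>v y))"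
    by (rule assoc_mult_mat_vec[OF Ei X Ejy])
  also have "prim_idem d M f j *\<^sub>v y = (Q *\<^sub>v y) $ j \<cdot>\<^sub>v col P j" by (rule prim_vec(2)[OF j y])
  also have "X *\<^sub>v ((Q *\<^sub>v y) $ j \<cdot>\<^sub>v col P j) = (Q *\<^sub>v y) $ j \<cdot>\<^sub>v (X *\<^sub>v col P j)"
    by (rule mult_mat_vec[OF X colP_carrier])
  also have "prim_idem d M f i *\<^sub>v ((Q *\<^sub>v y) $ j \<cdot>\<^sub>v (X *\<^sub>v col P j)) =
     (Q *\<^sub>v y) $ j \<cdot>\<^sub>v (prim_idem d M f i *\<^sub>v (X *\<^sub>v col P j))"
    by (rule mult_mat_vec[OF Ei XP])
  also have "prim_idem d M f i *\<^sub>v (X *\<^sub>v col P j) = (Q *\<^sub>v (X *\<^sub>v col P j)) $ i \<cdot>\<^sub>v col P i"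
    by (rule prim_vec(2)[OF i XP])
  finally show ?thesis .
qed

lemma EXE_zero: assumes i: "i \<le> d" and j: "j \<le> d" and X: "X \<in> carrier_mat (Suc d) (Suc d)"
  shows "prim_idem d M f i * X * prim_idem d M f j = 0\<^sub>m (Suc d) (Suc d) \<longleftrightarrow>
     (Q *\<^sub>v (X *\<^sub>v col P j)) $ i = 0"
proof
  assume N: "prim_idem d M f i * X * prim_idem d M f j = 0\<^sub>m (Suc d) (Suc d)"
  have "(prim_idem d M f i * X * prim_idem d M f j) *\<^sub>v col P j = 0\<^sub>v (Suc d)"
    unfolding N by (intro eq_vecI) auto
  moreover have "(Q *\<^sub>v col P j) $ j = 1" using QcolP[of j] j by simp
  ultimately have "(Q *\<^sub>v (X *\<^sub>v col P j)) $ i \<cdot>\<^sub>v col P i = 0\<^sub>v (Suc d)"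
    using N_apply[OF i j X colP_carrier] by simp
  moreover have ilt: "i < Suc d" using i by simp
  ultimately show "(Q *\<^sub>v (X *\<^sub>v col P j)) $ i = 0"
    using smult_zero_cancel[OF _ colP_carrier colP_nz[OF ilt]] by blast
next
  assume z: "(Q *\<^sub>v (X *\<^sub>v col P j)) $ i = 0"
  have Ei: "prim_idem d M f i \<in> carrier_mat (Suc d) (Suc d)" using prim_vec(1)[OF i, of "0\<^sub>v (Suc d)"] by simp
  have Ej: "prim_idem d M f j \<in> carrier_mat (Suc d) (Suc d)" using prim_vec(1)[OF j, of "0\<^sub>v (Suc d)"] by simp
  show "prim_idem d M f i * X * prim_idem d M f j = 0\<^sub>m (Suc d) (Suc d)"
  proof (rule mat_zero_if_mult_zero)
    show "prim_idem d M f i * X * prim_idem d M f j \<in> carrier_mat (Suc d) (Suc d)" using Ei Ej X by simp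
    fix y :: "'a vec" assume y: "y \<in> carrier_vec (Suc d)"
    show "(prim_idem d M f i * X * prim_idem d M f j) *\<^sub>v y = 0\<^sub>v (Suc d)"
      unfolding N_apply[OF i j X y] z using P by (intro eq_vecI) auto
  qed
qed

lemma Q_add: "x \<in> carrier_vec (Suc d) \<Longrightarrow> y \<in> carrier_vec (Suc d) \<Longrightarrow> Q *\<^sub>v (x + y) = Q *\<^sub>v x + Q *\<^sub>v y"
  by (rule mult_add_distrib_mat_vec[OF Q])

lemma Q_zero: "Q *\<^sub>v 0\<^sub>v (Suc d) = 0\<^sub>v (Suc d)"
  using Q by (intro eq_vecI) auto

lemma P_zero: "P *\<^sub>v 0\<^sub>v (Suc d) = 0\<^sub>v (Suc d)"
  using P by (intro eq_vecI) auto

lemma Q_smult_col: "j < Suc d \<Longrightarrow> Q *\<^sub>v (c \<cdot>\<^sub>v col P j) = c \<cdot>\<^sub>v unit_vec (Suc d) j"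
  using mult_mat_vec[OF Q colP_carrier, of c j] QcolP by simp

lemma sum_images_sub:
  assumes F: "\<forall>h \<in> set hs. \<forall>y \<in> carrier_vec (Suc d). F h *\<^sub>v y = (Q *\<^sub>v y) $ (g h) \<cdot>\<^sub>v col P (g h)"
    and g: "\<forall>h \<in> set hs. g h < Suc d"
    and v: "\<forall>h. v h \<in> carrier_vec (Suc d)"
  shows "foldr (\<lambda>h acc. F h *\<^sub>v v h + acc) hs (0\<^sub>v (Suc d)) \<in> carrier_vec (Suc d) \<and>
    (\<forall>k < Suc d. k \<notin> g ` set hs \<longrightarrow> (Q *\<^sub>v foldr (\<lambda>h acc. F h *\<^sub>v v h + acc) hs (0\<^sub>v (Suc d))) $ k = 0)"
  using F g
proof (induction hs)
  case Nil
  then show ?case using Q_zero by simp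
next
  case (Cons h hs)
  let ?acc = "foldr (\<lambda>h acc. F h *\<^sub>v v h + acc) hs (0\<^sub>v (Suc d))"
  have IH: "?acc \<in> carrier_vec (Suc d)" "\<forall>k < Suc d. k \<notin> g ` set hs \<longrightarrow> (Q *\<^sub>v ?acc) $ k = 0"
    using Cons by auto
  have Fh: "F h *\<^sub>v v h = (Q *\<^sub>v v h) $ (g h) \<cdot>\<^sub>v col P (g h)" using Cons.prems v by auto
  have gh: "g h < Suc d" using Cons.prems by auto
  have c1: "(Q *\<^sub>v v h) $ (g h) \<cdot>\<^sub>v col P (g h) \<in> carrier_vec (Suc d)" by simp
  have "Q *\<^sub>v (F h *\<^sub>v v h + ?acc) = (Q *\<^sub>v v h) $ (g h) \<cdot>\<^sub>v unit_vec (Suc d) (g h) + Q *\<^sub>v ?acc"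
    unfolding Fh Q_add[OF c1 IH(1)] Q_smult_col[OF gh] ..
  have "(Q *\<^sub>v (F h *\<^sub>v v h + ?acc)) $ k = 0" if k: "k < Suc d" "k \<notin> g ` set (h # hs)" for k
  proof -
    have "(Q *\<^sub>v (F h *\<^sub>v v h + ?acc)) $ k = (Q *\<^sub>v v h) $ (g h) * unit_vec (Suc d) (g h) $ k + (Q *\<^sub>v ?acc) $ k"
      unfolding \<open>Q *\<^sub>v (F h *\<^sub>v v h + ?acc) = _\<close> using k Q IH(1) by simp
    also have "unit_vec (Suc d) (g h) $ k = 0" using k by (auto simp: unit_vec_def)
    also have "(Q *\<^sub>v ?acc) $ k = 0" using IH(2) k by simp
    finally show ?thesis by simp
  qed
  moreover have "F h *\<^sub>v v h + ?acc \<in> carrier_vec (Suc d)" using IH(1) c1 Fh by simp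
  ultimately show ?case by simp
qed

lemma sum_images_sup:
  assumes F: "\<forall>h \<in> set hs. \<forall>y \<in> carrier_vec (Suc d). F h *\<^sub>v y = (Q *\<^sub>v y) $ (g h) \<cdot>\<^sub>v col P (g h)"
    and g: "\<forall>h \<in> set hs. g h < Suc d" and dist: "distinct (map g hs)"
    and x: "x \<in> carrier_vec (Suc d)"
  shows "foldr (\<lambda>h acc. F h *\<^sub>v x + acc) hs (0\<^sub>v (Suc d)) =
    P *\<^sub>v vec (Suc d) (\<lambda>k. if k \<in> g ` set hs then (Q *\<^sub>v x) $ k else 0)"
  using F g dist
proof (induction hs)
  case Nil
  have "vec (Suc d) (\<lambda>k. 0) = (0\<^sub>v (Suc d) :: 'a vec)" by (intro eq_vecI) auto
  then show ?case using P_zero by simp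
next
  case (Cons h hs)
  let ?old = "vec (Suc d) (\<lambda>k. if k \<in> g ` set hs then (Q *\<^sub>v x) $ k else 0)"
  let ?del = "vec (Suc d) (\<lambda>k. if k = g h then (Q *\<^sub>v x) $ (g h) else 0)"
  have IH: "foldr (\<lambda>h acc. F h *\<^sub>v x + acc) hs (0\<^sub>v (Suc d)) = P *\<^sub>v ?old" using Cons by auto
  have Fh: "F h *\<^sub>v x = (Q *\<^sub>v x) $ (g h) \<cdot>\<^sub>v col P (g h)" using Cons.prems x by auto
  have gh: "g h < Suc d" and ghn: "g h \<notin> g ` set hs" using Cons.prems by auto
  have "F h *\<^sub>v x + P *\<^sub>v ?old = P *\<^sub>v ?del + P *\<^sub>v ?old"
    unfolding Fh Pvec_delta[OF P gh] ..
  also have "\<dots> = P *\<^sub>v (?del + ?old)"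
    by (rule mult_add_distrib_mat_vec[OF P, symmetric]) auto
  also have "?del + ?old = vec (Suc d) (\<lambda>k. if k \<in> g ` set (h # hs) then (Q *\<^sub>v x) $ k else 0)"
    using ghn by (intro eq_vecI) auto
  finally show ?case using IH by simp
qed

lemma sum_images_char:
  assumes F: "\<forall>h \<in> set hs. \<forall>y \<in> carrier_vec (Suc d). F h *\<^sub>v y = (Q *\<^sub>v y) $ (g h) \<cdot>\<^sub>v col P (g h)"
    and g: "\<forall>h \<in> set hs. g h < Suc d" and dist: "distinct (map g hs)"
  shows "x \<in> sum_images d F hs \<longleftrightarrow>
     x \<in> carrier_vec (Suc d) \<and> (\<forall>k < Suc d. k \<notin> g ` set hs \<longrightarrow> (Q *\<^sub>v x) $ k = 0)"
proof
  assume "x \<in> sum_images d F hs"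
  then obtain v where x: "x = foldr (\<lambda>h acc. F h *\<^sub>v v h + acc) hs (0\<^sub>v (Suc d))"
    and v: "\<forall>h. v h \<in> carrier_vec (Suc d)" unfolding sum_images_def by blast
  show "x \<in> carrier_vec (Suc d) \<and> (\<forall>k < Suc d. k \<notin> g ` set hs \<longrightarrow> (Q *\<^sub>v x) $ k = 0)"
    unfolding x by (rule sum_images_sub[OF F g v])
next
  assume x: "x \<in> carrier_vec (Suc d) \<and> (\<forall>k < Suc d. k \<notin> g ` set hs \<longrightarrow> (Q *\<^sub>v x) $ k = 0)"
  have "vec (Suc d) (\<lambda>k. if k \<in> g ` set hs then (Q *\<^sub>v x) $ k else 0) = Q *\<^sub>v x"
    using x Q by (intro eq_vecI) auto
  then have "foldr (\<lambda>h acc. F h *\<^sub>v x + acc) hs (0\<^sub>v (Suc d)) = x"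
    using sum_images_sup[OF F g dist, of x] x recon by simp
  then show "x \<in> sum_images d F hs" unfolding sum_images_def using x
    by (auto intro!: exI[where x="\<lambda>_. x"])
qed


lemma coordR_gen: assumes X: "X \<in> carrier_mat (Suc d) (Suc d)" and x: "x \<in> carrier_vec (Suc d)"
  and k: "k < Suc d"
  shows "(Q *\<^sub>v ((X - c \<cdot>\<^sub>m 1\<^sub>m (Suc d)) *\<^sub>v x)) $ k =
    (\<Sum>l<Suc d. (Q * X * P) $$ (k, l) * (Q *\<^sub>v x) $ l) - c * (Q *\<^sub>v x) $ k"
proof -
  have "1 \<cdot>\<^sub>m (X - c \<cdot>\<^sub>m 1\<^sub>m (Suc d)) = X - c \<cdot>\<^sub>m 1\<^sub>m (Suc d)" using X by (intro eq_matI) auto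
  then have "(X - c \<cdot>\<^sub>m 1\<^sub>m (Suc d)) *\<^sub>v x = (1 \<cdot>\<^sub>m (X - c \<cdot>\<^sub>m 1\<^sub>m (Suc d))) *\<^sub>v x" by simp
  also have "\<dots> = 1 \<cdot>\<^sub>v (X *\<^sub>v x - c \<cdot>\<^sub>v x)" by (rule S_vec[OF X x])
  finally have e: "(X - c \<cdot>\<^sub>m 1\<^sub>m (Suc d)) *\<^sub>v x = X *\<^sub>v x - c \<cdot>\<^sub>v x" by simp
  have "Q *\<^sub>v (X *\<^sub>v x - c \<cdot>\<^sub>v x) = Q *\<^sub>v (X *\<^sub>v x) - Q *\<^sub>v (c \<cdot>\<^sub>v x)"
    using X x by (intro mult_minus_distrib_mat_vec[OF Q]) auto
  also have "Q *\<^sub>v (c \<cdot>\<^sub>v x) = c \<cdot>\<^sub>v (Q *\<^sub>v x)" by (rule mult_mat_vec[OF Q x])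
  finally have "(Q *\<^sub>v ((X - c \<cdot>\<^sub>m 1\<^sub>m (Suc d)) *\<^sub>v x)) $ k = (Q *\<^sub>v (X *\<^sub>v x)) $ k - c * (Q *\<^sub>v x) $ k"
    unfolding e using Q k by simp
  then show ?thesis unfolding coord_sum[OF X x k] .
qed

end

fun uvec :: "nat \<Rightarrow> 'a::field mat \<Rightarrow> (nat \<Rightarrow> 'a) \<Rightarrow> 'a vec \<Rightarrow> nat \<Rightarrow> 'a vec" where
  "uvec n A g u 0 = u"
| "uvec n A g u (Suc i) = (A - g i \<cdot>\<^sub>m 1\<^sub>m n) *\<^sub>v uvec n A g u i"

lemma uvec_carrier: "A \<in> carrier_mat n n \<Longrightarrow> u \<in> carrier_vec n \<Longrightarrow> uvec n A g u i \<in> carrier_vec n"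
proof (induction i)
  case (Suc i)
  have "A - g i \<cdot>\<^sub>m 1\<^sub>m n \<in> carrier_mat n n" by (intro minus_carrier_mat smult_carrier_mat one_carrier_mat)
  then show ?case using Suc mult_mat_vec_carrier by simp
qed simp

lemma tri_step:
  fixes B :: "nat \<Rightarrow> nat \<Rightarrow> 'a::field" and z :: "'a vec"
  assumes tri: "\<forall>k<Suc d. \<forall>l<Suc d. (k > l+1 \<or> l > k+1) \<longrightarrow> B k l = 0"
    and sub: "B (Suc p) p \<noteq> 0" and p: "p < d"
    and zs: "\<forall>k<Suc d. k > p \<longrightarrow> z $ k = 0" and zp: "z $ p \<noteq> 0"
  shows "\<forall>k<Suc d. k > Suc p \<longrightarrow> (\<Sum>l<Suc d. B k l * z $ l) - c * z $ k = 0"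
    "(\<Sum>l<Suc d. B (Suc p) l * z $ l) - c * z $ (Suc p) \<noteq> 0"
proof -
  show "\<forall>k<Suc d. k > Suc p \<longrightarrow> (\<Sum>l<Suc d. B k l * z $ l) - c * z $ k = 0"
  proof (intro allI impI)
    fix k assume k: "k < Suc d" "k > Suc p"
    have "(\<Sum>l<Suc d. B k l * z $ l) = 0"
    proof (rule sum.neutral, intro ballI)
      fix l assume l: "l \<in> {..<Suc d}"
      show "B k l * z $ l = 0"
      proof (cases "l > p")
        case True then show ?thesis using zs l by auto
      next
        case False then show ?thesis using tri k l by auto
      qed
    qed
    moreover have "z $ k = 0" using zs k by auto
    ultimately show "(\<Sum>l<Suc d. B k l * z $ l) - c * z $ k = 0" by simp
  qed
  have "(\<Sum>l<Suc d. B (Suc p) l * z $ l) = B (Suc p) p * z $ p + (\<Sum>l\<in>{..<Suc d} - {p}. B (Suc p) l * z $ l)"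
    using p by (subst sum.remove[of _ p]) auto
  also have "(\<Sum>l\<in>{..<Suc d} - {p}. B (Suc p) l * z $ l) = 0"
  proof (rule sum.neutral, intro ballI)
    fix l assume l: "l \<in> {..<Suc d} - {p}"
    show "B (Suc p) l * z $ l = 0"
    proof (cases "l > p")
      case True then show ?thesis using zs l by auto
    next
      case False then have "l < p" using l by auto
      then show ?thesis using tri l p by auto
    qed
  qed
  finally show "(\<Sum>l<Suc d. B (Suc p) l * z $ l) - c * z $ (Suc p) \<noteq> 0"
    using zs p sub zp by auto
qed

context spec begin

lemma uvec_coord: assumes x: "x \<in> carrier_vec (Suc d)"
  shows "Q *\<^sub>v uvec (Suc d) M g x i = vec (Suc d) (\<lambda>k. (\<Prod>j<i. (f k - g j)) * (Q *\<^sub>v x) $ k)"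
proof (induction i)
  case 0
  then show ?case using Q x by (intro eq_vecI) auto
next
  case (Suc i)
  have c: "uvec (Suc d) M g x i \<in> carrier_vec (Suc d)" using uvec_carrier[OF M x] .
  show ?case unfolding uvec.simps coordR[OF c] Suc by (intro eq_vecI) (auto simp: algebra_simps)
qed

lemma uvec_support:
  assumes X: "X \<in> carrier_mat (Suc d) (Suc d)"
    and tri: "\<forall>k<Suc d. \<forall>l<Suc d. (k > l+1 \<or> l > k+1) \<longrightarrow> (Q * X * P) $$ (k, l) = 0"
    and sub: "\<forall>p<d. (Q * X * P) $$ (Suc p, p) \<noteq> 0"
    and x: "x \<in> carrier_vec (Suc d)"
    and xs: "\<forall>k<Suc d. k > p \<longrightarrow> (Q *\<^sub>v x) $ k = 0" and xp: "(Q *\<^sub>v x) $ p \<noteq> 0"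
    and pi: "p + i \<le> d"
  shows "(\<forall>k<Suc d. k > p + i \<longrightarrow> (Q *\<^sub>v uvec (Suc d) X g x i) $ k = 0) \<and> (Q *\<^sub>v uvec (Suc d) X g x i) $ (p + i) \<noteq> 0"
  using pi
proof (induction i)
  case 0
  then show ?case using xs xp by simp
next
  case (Suc i)
  let ?u = "uvec (Suc d) X g x i"
  have c: "?u \<in> carrier_vec (Suc d)" using uvec_carrier[OF X x] .
  have IH: "\<forall>k<Suc d. k > p + i \<longrightarrow> (Q *\<^sub>v ?u) $ k = 0" "(Q *\<^sub>v ?u) $ (p + i) \<noteq> 0"
    using Suc by auto
  have pl: "p + i < d" using Suc.prems by simp
  note ts = tri_step[where B="\<lambda>k l. (Q * X * P) $$ (k, l)" and z="Q *\<^sub>v ?u" and p="p+i" and d=d and c="g i",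
      OF tri sub[rule_format, OF pl] pl IH]
  have "(Q *\<^sub>v uvec (Suc d) X g x (Suc i)) $ k = 0" if k: "k < Suc d" "k > p + Suc i" for k
    using ts(1) k unfolding uvec.simps coordR_gen[OF X c k(1)] by auto
  moreover have "(Q *\<^sub>v uvec (Suc d) X g x (Suc i)) $ (p + Suc i) \<noteq> 0"
  proof -
    have k': "Suc (p + i) < Suc d" using pl by simp
    have "(Q *\<^sub>v uvec (Suc d) X g x (Suc i)) $ (Suc (p + i)) =
      (\<Sum>l<Suc d. (Q * X * P) $$ (Suc (p + i), l) * (Q *\<^sub>v ?u) $ l) - g i * (Q *\<^sub>v ?u) $ (Suc (p + i))"
      unfolding uvec.simps by (rule coordR_gen[OF X c k'])
    then show ?thesis using ts(2) by simp
  qed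
  ultimately show ?case by auto
qed

end


lemma smult_cancel:
  assumes e: "(a::'a::field) \<cdot>\<^sub>v v = b \<cdot>\<^sub>v v" and v: "v \<in> carrier_vec n" and nz: "v \<noteq> 0\<^sub>v n"
  shows "a = b"
proof -
  obtain r where r: "r < n" "v $ r \<noteq> 0"
  proof (rule ccontr)
    assume "\<not> thesis"
    then have "\<forall>r<n. v $ r = 0" using that by blast
    then have "v = 0\<^sub>v n" using v by (intro eq_vecI) auto
    with nz show False by simp
  qed
  have "a * v $ r = b * v $ r" using arg_cong[OF e, of "\<lambda>x. x $ r"] r v by simp
  then show ?thesis using r by simp
qed

locale LS = A: spec d A P Q th + S: spec d As Ps Qs ths
  for d :: nat and A P Q :: "'a::field mat" and th :: "nat \<Rightarrow> 'a"
    and As Ps Qs :: "'a mat" and ths :: "nat \<Rightarrow> 'a" +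
  fixes E Es :: "nat \<Rightarrow> 'a mat"
  assumes E: "\<forall>i\<le>d. E i = prim_idem d A th i" and Es: "\<forall>i\<le>d. Es i = prim_idem d As ths i"
    and triB: "\<forall>k<Suc d. \<forall>l<Suc d. (k > l+1 \<or> l > k+1) \<longrightarrow> (Qs * A * Ps) $$ (k, l) = 0"
    and subB: "\<forall>p<d. (Qs * A * Ps) $$ (Suc p, p) \<noteq> 0"
    and triC: "\<forall>k<Suc d. \<forall>l<Suc d. (k > l+1 \<or> l > k+1) \<longrightarrow> (Q * As * P) $$ (k, l) = 0"
begin

abbreviation uu :: "nat \<Rightarrow> 'a vec" where
  "uu i \<equiv> uvec (Suc d) A (\<lambda>j. th (d - j)) (col Ps 0) i"

lemma uu_carrier: "uu i \<in> carrier_vec (Suc d)"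
  using uvec_carrier[OF A.M S.colP_carrier] .

lemma uu_support: assumes i: "i \<le> d"
  shows "(\<forall>k<Suc d. k > i \<longrightarrow> (Qs *\<^sub>v uu i) $ k = 0) \<and> (Qs *\<^sub>v uu i) $ i \<noteq> 0"
proof -
  have q0: "Qs *\<^sub>v col Ps 0 = unit_vec (Suc d) 0" using S.QcolP by simp
  have "\<forall>k<Suc d. k > 0 \<longrightarrow> (Qs *\<^sub>v col Ps 0) $ k = 0" unfolding q0 by (auto simp: unit_vec_def)
  moreover have "(Qs *\<^sub>v col Ps 0) $ 0 \<noteq> 0" unfolding q0 by simp
  ultimately show ?thesis
    using S.uvec_support[OF A.M triB subB S.colP_carrier, where p=0 and i=i and g="\<lambda>j. th (d - j)"] i by simp
qed

lemma uu_nz: "i \<le> d \<Longrightarrow> uu i \<noteq> 0\<^sub>v (Suc d)"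
  using uu_support[of i] S.Q_zero by auto

lemma uu_Q: assumes i: "i \<le> d" and k: "k < Suc d" "k > d - i"
  shows "(Q *\<^sub>v uu i) $ k = 0"
proof -
  have "(Q *\<^sub>v uu i) $ k = (\<Prod>j<i. (th k - th (d - j))) * (Q *\<^sub>v col Ps 0) $ k"
    unfolding A.uvec_coord[OF S.colP_carrier] using k by simp
  also have "(\<Prod>j<i. (th k - th (d - j))) = 0"
  proof -
    have "d - k \<in> {..<i}" "th k - th (d - (d - k)) = 0" using k i by auto
    then show ?thesis by (simp add: prod_zero_iff) blast
  qed
  finally show ?thesis by simp
qed

lemma W_char: assumes i: "i \<le> d"
  shows "x \<in> sum_images d Es [0..<Suc i] \<longleftrightarrow> x \<in> carrier_vec (Suc d) \<and> (\<forall>k<Suc d. k > i \<longrightarrow> (Qs *\<^sub>v x) $ k = 0)"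
proof -
  have F: "\<forall>h \<in> set [0..<Suc i]. \<forall>y \<in> carrier_vec (Suc d). Es h *\<^sub>v y = (Qs *\<^sub>v y) $ (id h) \<cdot>\<^sub>v col Ps (id h)"
    using Es S.prim_vec(2) i by (auto simp del: upt_Suc)
  have g: "\<forall>h \<in> set [0..<Suc i]. id h < Suc d" using i by (auto simp del: upt_Suc)
  have "x \<in> sum_images d Es [0..<Suc i] \<longleftrightarrow> x \<in> carrier_vec (Suc d) \<and> (\<forall>k<Suc d. k \<notin> id ` set [0..<Suc i] \<longrightarrow> (Qs *\<^sub>v x) $ k = 0)"
    by (rule S.sum_images_char[OF F g]) simp
  also have "\<dots> \<longleftrightarrow> x \<in> carrier_vec (Suc d) \<and> (\<forall>k<Suc d. k > i \<longrightarrow> (Qs *\<^sub>v x) $ k = 0)"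
    by (auto simp del: upt_Suc)
  finally show ?thesis .
qed

lemma W'_char: assumes i: "i \<le> d"
  shows "x \<in> sum_images d (\<lambda>j. E (d - j)) [i..<Suc d] \<longleftrightarrow> x \<in> carrier_vec (Suc d) \<and> (\<forall>k<Suc d. k > d - i \<longrightarrow> (Q *\<^sub>v x) $ k = 0)"
proof -
  have F: "\<forall>h \<in> set [i..<Suc d]. \<forall>y \<in> carrier_vec (Suc d). E (d - h) *\<^sub>v y = (Q *\<^sub>v y) $ (d - h) \<cdot>\<^sub>v col P (d - h)"
    using E A.prim_vec(2) by (auto simp del: upt_Suc)
  have g: "\<forall>h \<in> set [i..<Suc d]. d - h < Suc d" by (auto simp del: upt_Suc)
  have dist: "distinct (map (\<lambda>h. d - h) [i..<Suc d])"
    by (auto simp: distinct_map inj_on_def simp del: upt_Suc)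
  have "x \<in> sum_images d (\<lambda>j. E (d - j)) [i..<Suc d] \<longleftrightarrow> x \<in> carrier_vec (Suc d) \<and> (\<forall>k<Suc d. k \<notin> (\<lambda>h. d - h) ` set [i..<Suc d] \<longrightarrow> (Q *\<^sub>v x) $ k = 0)"
    by (rule A.sum_images_char[OF F g dist])
  also have "\<dots> \<longleftrightarrow> x \<in> carrier_vec (Suc d) \<and> (\<forall>k<Suc d. k > d - i \<longrightarrow> (Q *\<^sub>v x) $ k = 0)"
  proof -
    have "k \<in> (\<lambda>h. d - h) ` set [i..<Suc d] \<longleftrightarrow> k \<le> d - i" if "k < Suc d" for k
    proof
      assume "k \<in> (\<lambda>h. d - h) ` set [i..<Suc d]" then show "k \<le> d - i" by (auto simp del: upt_Suc)
    next
      assume "k \<le> d - i" then show "k \<in> (\<lambda>h. d - h) ` set [i..<Suc d]"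
        using that i by (auto simp del: upt_Suc intro!: image_eqI[where x="d - k"])
    qed
    then show ?thesis by (auto simp: not_le)
  qed
  finally show ?thesis .
qed

lemma U_char: assumes i: "i \<le> d"
  shows "x \<in> split_space d (\<lambda>j. E (d - j)) Es i \<longleftrightarrow> x \<in> carrier_vec (Suc d) \<and>
     (\<forall>k<Suc d. k > i \<longrightarrow> (Qs *\<^sub>v x) $ k = 0) \<and> (\<forall>k<Suc d. k > d - i \<longrightarrow> (Q *\<^sub>v x) $ k = 0)"
  unfolding split_space_def using W_char[OF i] W'_char[OF i] by blast

lemma uu_in_U: "i \<le> d \<Longrightarrow> uu i \<in> split_space d (\<lambda>j. E (d - j)) Es i"
  unfolding U_char using uu_carrier uu_support uu_Q by blast


lemma U_one: assumes i: "i \<le> d" and x: "x \<in> split_space d (\<lambda>j. E (d - j)) Es i"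
  shows "x = ((Qs *\<^sub>v x) $ i / (Qs *\<^sub>v uu i) $ i) \<cdot>\<^sub>v uu i"
proof -
  let ?t = "(Qs *\<^sub>v x) $ i / (Qs *\<^sub>v uu i) $ i"
  define z where "z = x - ?t \<cdot>\<^sub>v uu i"
  have xc: "x \<in> carrier_vec (Suc d)" and xs: "\<forall>k<Suc d. k > i \<longrightarrow> (Qs *\<^sub>v x) $ k = 0"
    and xq: "\<forall>k<Suc d. k > d - i \<longrightarrow> (Q *\<^sub>v x) $ k = 0" using x U_char[OF i] by auto
  have us: "\<forall>k<Suc d. k > i \<longrightarrow> (Qs *\<^sub>v uu i) $ k = 0" "(Qs *\<^sub>v uu i) $ i \<noteq> 0"
    using uu_support[OF i] by auto
  have tuc: "?t \<cdot>\<^sub>v uu i \<in> carrier_vec (Suc d)" using uu_carrier by simp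
  have zc: "z \<in> carrier_vec (Suc d)" unfolding z_def using xc tuc by simp
  have Qsz: "(Qs *\<^sub>v z) $ k = (Qs *\<^sub>v x) $ k - ?t * (Qs *\<^sub>v uu i) $ k" if k: "k < Suc d" for k
  proof -
    have "Qs *\<^sub>v z = Qs *\<^sub>v x - Qs *\<^sub>v (?t \<cdot>\<^sub>v uu i)"
      unfolding z_def by (rule mult_minus_distrib_mat_vec[OF S.Q xc tuc])
    also have "Qs *\<^sub>v (?t \<cdot>\<^sub>v uu i) = ?t \<cdot>\<^sub>v (Qs *\<^sub>v uu i)" by (rule mult_mat_vec[OF S.Q uu_carrier])
    finally show ?thesis using k S.Q by simp
  qed
  have Qz: "(Q *\<^sub>v z) $ k = (Q *\<^sub>v x) $ k - ?t * (Q *\<^sub>v uu i) $ k" if k: "k < Suc d" for k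
  proof -
    have "Q *\<^sub>v z = Q *\<^sub>v x - Q *\<^sub>v (?t \<cdot>\<^sub>v uu i)"
      unfolding z_def by (rule mult_minus_distrib_mat_vec[OF A.Q xc tuc])
    also have "Q *\<^sub>v (?t \<cdot>\<^sub>v uu i) = ?t \<cdot>\<^sub>v (Q *\<^sub>v uu i)" by (rule mult_mat_vec[OF A.Q uu_carrier])
    finally show ?thesis using k A.Q by simp
  qed
  have zs: "\<forall>k<Suc d. k \<ge> i \<longrightarrow> (Qs *\<^sub>v z) $ k = 0"
  proof (intro allI impI)
    fix k assume k: "k < Suc d" "k \<ge> i"
    show "(Qs *\<^sub>v z) $ k = 0"
    proof (cases "k = i")
      case True then show ?thesis using Qsz k us(2) by simp
    next
      case False then show ?thesis using Qsz k xs us(1) by simp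
    qed
  qed
  have zq: "\<forall>k<Suc d. k > d - i \<longrightarrow> (Q *\<^sub>v z) $ k = 0"
    using Qz xq uu_Q[OF i] by simp
  have "z = 0\<^sub>v (Suc d)"
  proof (rule ccontr)
    assume znz: "z \<noteq> 0\<^sub>v (Suc d)"
    have "\<exists>k<Suc d. (Qs *\<^sub>v z) $ k \<noteq> 0"
    proof (rule ccontr)
      assume "\<not> ?thesis"
      then have "Qs *\<^sub>v z = 0\<^sub>v (Suc d)" using S.Q by (intro eq_vecI) auto
      then show False using S.Qzero[OF zc] znz by simp
    qed
    define K where "K = {k. k < Suc d \<and> (Qs *\<^sub>v z) $ k \<noteq> 0}"
    define m where "m = Max K"
    have Kf: "finite K" and Kne: "K \<noteq> {}" unfolding K_def using \<open>\<exists>k<Suc d. _\<close> by auto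
    have mK: "m \<in> K" unfolding m_def using Kf Kne by (rule Max_in)
    have mmax: "\<forall>k<Suc d. k > m \<longrightarrow> (Qs *\<^sub>v z) $ k = 0"
    proof (intro allI impI, rule ccontr)
      fix k assume "k < Suc d" "m < k" "(Qs *\<^sub>v z) $ k \<noteq> 0"
      then have "k \<in> K" unfolding K_def by simp
      then have "k \<le> m" unfolding m_def using Kf by simp
      with \<open>m < k\<close> show False by simp
    qed
    have mp: "(Qs *\<^sub>v z) $ m \<noteq> 0" and mlt: "m < Suc d" using mK unfolding K_def by auto
    have mi: "m < i" using zs mp mlt by (meson not_le)
    define r where "r = Suc (d - i)"
    define y where "y = uvec (Suc d) A th z r"
    have yc: "y \<in> carrier_vec (Suc d)" unfolding y_def using uvec_carrier[OF A.M zc] .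
    have "m + r \<le> d" unfolding r_def using mi i by simp
    have mr: "m + r < Suc d" using \<open>m + r \<le> d\<close> by simp
    have "(Qs *\<^sub>v y) $ (m + r) \<noteq> 0"
      using S.uvec_support[OF A.M triB subB zc mmax mp, where i=r and g=th] \<open>m + r \<le> d\<close> unfolding y_def by simp
    then have ynz: "y \<noteq> 0\<^sub>v (Suc d)" using S.Q_zero mr by auto
    have "Q *\<^sub>v y = 0\<^sub>v (Suc d)"
    proof (rule eq_vecI)
      fix k assume "k < dim_vec (0\<^sub>v (Suc d) :: 'a vec)"
      hence k: "k < Suc d" by simp
      have "(Q *\<^sub>v y) $ k = (\<Prod>j<r. (th k - th j)) * (Q *\<^sub>v z) $ k"
        unfolding y_def A.uvec_coord[OF zc] using k by simp
      also have "\<dots> = 0"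
      proof (cases "k > d - i")
        case True then show ?thesis using zq k by simp
      next
        case False
        then have "k \<in> {..<r}" unfolding r_def by simp
        then have "(\<Prod>j<r. (th k - th j)) = 0" by (simp add: prod_zero_iff) blast
        then show ?thesis by simp
      qed
      finally show "(Q *\<^sub>v y) $ k = 0\<^sub>v (Suc d) $ k" using k by simp
    qed (use A.Q in simp)
    then show False using A.Qzero[OF yc] ynz by simp
  qed
  show ?thesis
  proof (rule eq_vecI)
    fix k assume "k < dim_vec (?t \<cdot>\<^sub>v uu i)"
    hence k: "k < Suc d" using uu_carrier[of i] by simp
    have "z $ k = 0" using \<open>z = 0\<^sub>v (Suc d)\<close> k by simp
    moreover have "z $ k = x $ k - (?t \<cdot>\<^sub>v uu i) $ k" unfolding z_def using k tuc by simp
    ultimately show "x $ k = (?t \<cdot>\<^sub>v uu i) $ k" by simp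
  qed (use xc uu_carrier[of i] in simp)
qed


definition phi :: "nat \<Rightarrow> 'a" where
  "phi i = (Qs *\<^sub>v ((As - ths i \<cdot>\<^sub>m 1\<^sub>m (Suc d)) *\<^sub>v uu i)) $ (i - 1) / (Qs *\<^sub>v uu (i - 1)) $ (i - 1)"

lemma As_step: assumes i1: "1 \<le> i" and i: "i \<le> d"
  shows "(As - ths i \<cdot>\<^sub>m 1\<^sub>m (Suc d)) *\<^sub>v uu i = phi i \<cdot>\<^sub>v uu (i - 1)"
proof -
  let ?y = "(As - ths i \<cdot>\<^sub>m 1\<^sub>m (Suc d)) *\<^sub>v uu i"
  have i': "i - 1 \<le> d" using i by simp
  have Rc: "As - ths i \<cdot>\<^sub>m 1\<^sub>m (Suc d) \<in> carrier_mat (Suc d) (Suc d)"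
    by (intro minus_carrier_mat smult_carrier_mat one_carrier_mat)
  have yc: "?y \<in> carrier_vec (Suc d)" using mult_mat_vec_carrier[OF Rc uu_carrier] .
  have ys: "\<forall>k<Suc d. k > i - 1 \<longrightarrow> (Qs *\<^sub>v ?y) $ k = 0"
  proof (intro allI impI)
    fix k assume k: "k < Suc d" "k > i - 1"
    have "(Qs *\<^sub>v ?y) $ k = (ths k - ths i) * (Qs *\<^sub>v uu i) $ k"
      unfolding S.coordR[OF uu_carrier] using k by simp
    also have "\<dots> = 0"
    proof (cases "k = i")
      case False then show ?thesis using uu_support[OF i] k by auto
    qed simp
    finally show "(Qs *\<^sub>v ?y) $ k = 0" .
  qed
  have yq: "\<forall>k<Suc d. k > d - (i - 1) \<longrightarrow> (Q *\<^sub>v ?y) $ k = 0"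
  proof (intro allI impI)
    fix k assume k: "k < Suc d" "k > d - (i - 1)"
    have "(Q *\<^sub>v ?y) $ k = (\<Sum>l<Suc d. (Q * As * P) $$ (k, l) * (Q *\<^sub>v uu i) $ l) - ths i * (Q *\<^sub>v uu i) $ k"
      by (rule A.coordR_gen[OF S.M uu_carrier k(1)])
    also have "(Q *\<^sub>v uu i) $ k = 0" using uu_Q[OF i k(1)] k by simp
    also have "(\<Sum>l<Suc d. (Q * As * P) $$ (k, l) * (Q *\<^sub>v uu i) $ l) = 0"
    proof (rule sum.neutral, intro ballI)
      fix l assume l: "l \<in> {..<Suc d}"
      show "(Q * As * P) $$ (k, l) * (Q *\<^sub>v uu i) $ l = 0"
      proof (cases "l > d - i")
        case True then show ?thesis using uu_Q[OF i] l by simp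
      next
        case False
        then have "k > l + 1" using k i1 i by simp
        then show ?thesis using triC k l by auto
      qed
    qed
    finally show "(Q *\<^sub>v ?y) $ k = 0" by simp
  qed
  have "?y \<in> split_space d (\<lambda>j. E (d - j)) Es (i - 1)" unfolding U_char[OF i'] using yc ys yq by blast
  from U_one[OF i' this] show ?thesis unfolding phi_def .
qed

lemma smult_smult: "(a::'a) \<cdot>\<^sub>v (b \<cdot>\<^sub>v v) = (a * b) \<cdot>\<^sub>v v"
  by (intro eq_vecI) auto

lemma Mx_apply: assumes i1: "1 \<le> i" and i: "i \<le> d"
  shows "((A - th (d - (i - 1)) \<cdot>\<^sub>m 1\<^sub>m (Suc d)) * (As - ths i \<cdot>\<^sub>m 1\<^sub>m (Suc d))) *\<^sub>v (s \<cdot>\<^sub>v uu i)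
     = phi i \<cdot>\<^sub>v (s \<cdot>\<^sub>v uu i)"
proof -
  have R1: "A - th (d - (i - 1)) \<cdot>\<^sub>m 1\<^sub>m (Suc d) \<in> carrier_mat (Suc d) (Suc d)"
    by (intro minus_carrier_mat smult_carrier_mat one_carrier_mat)
  have R2: "As - ths i \<cdot>\<^sub>m 1\<^sub>m (Suc d) \<in> carrier_mat (Suc d) (Suc d)"
    by (intro minus_carrier_mat smult_carrier_mat one_carrier_mat)
  have sc: "s \<cdot>\<^sub>v uu i \<in> carrier_vec (Suc d)" using uu_carrier[of i] by simp
  have uc1: "uu (i - 1) \<in> carrier_vec (Suc d)" by (rule uu_carrier)
  have ui: "uu i = (A - th (d - (i - 1)) \<cdot>\<^sub>m 1\<^sub>m (Suc d)) *\<^sub>v uu (i - 1)"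
    using i1 uvec.simps(2)[of "Suc d" A "\<lambda>j. th (d - j)" "col Ps 0" "i - 1"] by simp
  have "((A - th (d - (i - 1)) \<cdot>\<^sub>m 1\<^sub>m (Suc d)) * (As - ths i \<cdot>\<^sub>m 1\<^sub>m (Suc d))) *\<^sub>v (s \<cdot>\<^sub>v uu i)
     = (A - th (d - (i - 1)) \<cdot>\<^sub>m 1\<^sub>m (Suc d)) *\<^sub>v ((As - ths i \<cdot>\<^sub>m 1\<^sub>m (Suc d)) *\<^sub>v (s \<cdot>\<^sub>v uu i))"
    by (rule assoc_mult_mat_vec[OF R1 R2 sc])
  also have "(As - ths i \<cdot>\<^sub>m 1\<^sub>m (Suc d)) *\<^sub>v (s \<cdot>\<^sub>v uu i) = s \<cdot>\<^sub>v ((As - ths i \<cdot>\<^sub>m 1\<^sub>m (Suc d)) *\<^sub>v uu i)"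
    by (rule mult_mat_vec[OF R2 uu_carrier])
  also have "\<dots> = (s * phi i) \<cdot>\<^sub>v uu (i - 1)" unfolding As_step[OF i1 i] smult_smult ..
  also have "(A - th (d - (i - 1)) \<cdot>\<^sub>m 1\<^sub>m (Suc d)) *\<^sub>v ((s * phi i) \<cdot>\<^sub>v uu (i - 1)) =
      (s * phi i) \<cdot>\<^sub>v uu i"
    unfolding ui by (rule mult_mat_vec[OF R1 uc1])
  also have "\<dots> = phi i \<cdot>\<^sub>v (s \<cdot>\<^sub>v uu i)" by (simp add: smult_smult mult.commute)
  finally show ?thesis .
qed

lemma split_val: assumes i1: "1 \<le> i" and i: "i \<le> d"
  and sg: "sg (i - 1) = th (d - (i - 1))" and sgs: "sgs i = ths i"
  shows "split_seq d A As (\<lambda>j. E (d - j)) Es sg sgs i = phi i"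
  unfolding split_seq_def sg sgs
proof (rule the_equality)
  show "\<forall>u\<in>split_space d (\<lambda>j. E (d - j)) Es i.
     ((A - th (d - (i - 1)) \<cdot>\<^sub>m 1\<^sub>m (Suc d)) * (As - ths i \<cdot>\<^sub>m 1\<^sub>m (Suc d))) *\<^sub>v u = phi i \<cdot>\<^sub>v u"
  proof
    fix u assume u: "u \<in> split_space d (\<lambda>j. E (d - j)) Es i"
    show "((A - th (d - (i - 1)) \<cdot>\<^sub>m 1\<^sub>m (Suc d)) * (As - ths i \<cdot>\<^sub>m 1\<^sub>m (Suc d))) *\<^sub>v u = phi i \<cdot>\<^sub>v u"
      using Mx_apply[OF i1 i] U_one[OF i u] by metis
  qed
next
  fix c assume c: "\<forall>u\<in>split_space d (\<lambda>j. E (d - j)) Es i.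
     ((A - th (d - (i - 1)) \<cdot>\<^sub>m 1\<^sub>m (Suc d)) * (As - ths i \<cdot>\<^sub>m 1\<^sub>m (Suc d))) *\<^sub>v u = c \<cdot>\<^sub>v u"
  have "1 \<cdot>\<^sub>v uu i = uu i" by (intro eq_vecI) auto
  then have "((A - th (d - (i - 1)) \<cdot>\<^sub>m 1\<^sub>m (Suc d)) * (As - ths i \<cdot>\<^sub>m 1\<^sub>m (Suc d))) *\<^sub>v uu i = phi i \<cdot>\<^sub>v uu i"
    using Mx_apply[OF i1 i, of 1] by simp
  moreover have "((A - th (d - (i - 1)) \<cdot>\<^sub>m 1\<^sub>m (Suc d)) * (As - ths i \<cdot>\<^sub>m 1\<^sub>m (Suc d))) *\<^sub>v uu i = c \<cdot>\<^sub>v uu i"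
    using c uu_in_U[OF i] by blast
  ultimately show "c = phi i" using smult_cancel[OF _ uu_carrier uu_nz[OF i]] by metis
qed


lemma As_iter: "j \<le> d \<Longrightarrow> uvec (Suc d) As (\<lambda>j. ths (d - j)) (uu d) j = (\<Prod>i\<in>{d-j<..d}. phi i) \<cdot>\<^sub>v uu (d - j)"
proof (induction j)
  case 0
  have "1 \<cdot>\<^sub>v uu d = uu d" by (intro eq_vecI) auto
  then show ?case by simp
next
  case (Suc j)
  have j: "j \<le> d" using Suc.prems by simp
  have R: "As - ths (d - j) \<cdot>\<^sub>m 1\<^sub>m (Suc d) \<in> carrier_mat (Suc d) (Suc d)"
    by (intro minus_carrier_mat smult_carrier_mat one_carrier_mat)
  have i1: "1 \<le> d - j" and i: "d - j \<le> d" using Suc.prems by auto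
  have "uvec (Suc d) As (\<lambda>j. ths (d - j)) (uu d) (Suc j) =
     (As - ths (d - j) \<cdot>\<^sub>m 1\<^sub>m (Suc d)) *\<^sub>v ((\<Prod>i\<in>{d-j<..d}. phi i) \<cdot>\<^sub>v uu (d - j))"
    using Suc.IH[OF j] by simp
  also have "\<dots> = (\<Prod>i\<in>{d-j<..d}. phi i) \<cdot>\<^sub>v ((As - ths (d - j) \<cdot>\<^sub>m 1\<^sub>m (Suc d)) *\<^sub>v uu (d - j))"
    by (rule mult_mat_vec[OF R uu_carrier])
  also have "\<dots> = ((\<Prod>i\<in>{d-j<..d}. phi i) * phi (d - j)) \<cdot>\<^sub>v uu (d - j - 1)"
    unfolding As_step[OF i1 i] smult_smult ..
  also have "(\<Prod>i\<in>{d-j<..d}. phi i) * phi (d - j) = (\<Prod>i\<in>{d - Suc j<..d}. phi i)"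
  proof -
    have "{d - Suc j<..d} = insert (d - j) {d-j<..d}" using Suc.prems by auto
    then show ?thesis by (simp add: mult.commute)
  qed
  also have "d - j - 1 = d - Suc j" by simp
  finally show ?case .
qed

lemma ud: "uu d = ((\<Prod>j<d. th 0 - th (d - j)) * (Q *\<^sub>v col Ps 0) $ 0) \<cdot>\<^sub>v col P 0"
proof (rule A.Qinj)
  show "uu d \<in> carrier_vec (Suc d)" by (rule uu_carrier)
  show "((\<Prod>j<d. th 0 - th (d - j)) * (Q *\<^sub>v col Ps 0) $ 0) \<cdot>\<^sub>v col P 0 \<in> carrier_vec (Suc d)" by simp
  show "Q *\<^sub>v uu d = Q *\<^sub>v (((\<Prod>j<d. th 0 - th (d - j)) * (Q *\<^sub>v col Ps 0) $ 0) \<cdot>\<^sub>v col P 0)"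
    unfolding A.uvec_coord[OF S.colP_carrier] A.Q_smult_col[of 0, simplified]
  proof (rule eq_vecI)
    fix k assume "k < dim_vec (((\<Prod>j<d. th 0 - th (d - j)) * (Q *\<^sub>v col Ps 0) $ 0) \<cdot>\<^sub>v unit_vec (Suc d) 0)"
    hence k: "k < Suc d" by simp
    show "vec (Suc d) (\<lambda>k. (\<Prod>j<d. th k - th (d - j)) * (Q *\<^sub>v col Ps 0) $ k) $ k =
         (((\<Prod>j<d. th 0 - th (d - j)) * (Q *\<^sub>v col Ps 0) $ 0) \<cdot>\<^sub>v unit_vec (Suc d) 0) $ k"
    proof (cases "k = 0")
      case False
      have "d - k \<in> {..<d}" "th k - th (d - (d - k)) = 0" using k False by auto
      then have "(\<Prod>j<d. th k - th (d - j)) = 0" by (simp add: prod_zero_iff) blast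
      then show ?thesis using k False by simp
    qed simp
  qed simp
qed

lemma main_id: "(\<Prod>i\<in>{1..d}. phi i) =
   (\<Prod>j<d. ths 0 - ths (d - j)) * ((\<Prod>j<d. th 0 - th (d - j)) * ((Q *\<^sub>v col Ps 0) $ 0 * (Qs *\<^sub>v col P 0) $ 0))"
proof -
  let ?w = "uvec (Suc d) As (\<lambda>j. ths (d - j)) (uu d) d"
  have "?w = (\<Prod>i\<in>{0<..d}. phi i) \<cdot>\<^sub>v col Ps 0" using As_iter[of d] by simp
  also have "{0<..d} = {1..d}" by auto
  finally have w1: "?w = (\<Prod>i\<in>{1..d}. phi i) \<cdot>\<^sub>v col Ps 0" .
  have "(Qs *\<^sub>v ?w) $ 0 = (\<Prod>i\<in>{1..d}. phi i)"
    unfolding w1 S.Q_smult_col[of 0, simplified] by simp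
  moreover have "(Qs *\<^sub>v ?w) $ 0 = (\<Prod>j<d. ths 0 - ths (d - j)) * (Qs *\<^sub>v uu d) $ 0"
    unfolding S.uvec_coord[OF uu_carrier] by simp
  moreover have "(Qs *\<^sub>v uu d) $ 0 = ((\<Prod>j<d. th 0 - th (d - j)) * (Q *\<^sub>v col Ps 0) $ 0) * (Qs *\<^sub>v col P 0) $ 0"
    unfolding ud mult_mat_vec[OF S.Q A.colP_carrier] using S.Q by simp
  ultimately show ?thesis by (simp add: ac_simps)
qed

lemma trace_val: "mat_trace (E 0 * Es 0) = (Q *\<^sub>v col Ps 0) $ 0 * (Qs *\<^sub>v col P 0) $ 0"
proof -
  have E0: "E 0 = prim_idem d A th 0" and Es0: "Es 0 = prim_idem d As ths 0" using E Es by auto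
  have E0c: "E 0 \<in> carrier_mat (Suc d) (Suc d)" unfolding E0 using A.prim_vec(1)[of 0 "0\<^sub>v (Suc d)"] by simp
  have Es0c: "Es 0 \<in> carrier_mat (Suc d) (Suc d)" unfolding Es0 using S.prim_vec(1)[of 0 "0\<^sub>v (Suc d)"] by simp
  have N: "E 0 * Es 0 \<in> carrier_mat (Suc d) (Suc d)" using E0c Es0c by simp
  have diag: "(E 0 * Es 0) $$ (r, r) = (Q *\<^sub>v col Ps 0) $ 0 * (Qs $$ (0, r) * P $$ (r, 0))" if r: "r < Suc d" for r
  proof -
    have ur: "unit_vec (Suc d) r \<in> carrier_vec (Suc d)" by simp
    have dE: "dim_row (E 0) = Suc d" "dim_col (E 0) = Suc d" "dim_row (Es 0) = Suc d" "dim_col (Es 0) = Suc d"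
      using E0c Es0c by auto
    have "(E 0 * Es 0) $$ (r, r) = ((E 0 * Es 0) *\<^sub>v unit_vec (Suc d) r) $ r" using dE r by simp
    also have "(E 0 * Es 0) *\<^sub>v unit_vec (Suc d) r = E 0 *\<^sub>v (Es 0 *\<^sub>v unit_vec (Suc d) r)"
      by (rule assoc_mult_mat_vec[OF E0c Es0c ur])
    also have "Es 0 *\<^sub>v unit_vec (Suc d) r = (Qs *\<^sub>v unit_vec (Suc d) r) $ 0 \<cdot>\<^sub>v col Ps 0"
      unfolding Es0 by (rule S.prim_vec(2)) simp_all
    also have "E 0 *\<^sub>v ((Qs *\<^sub>v unit_vec (Suc d) r) $ 0 \<cdot>\<^sub>v col Ps 0) =
        (Qs *\<^sub>v unit_vec (Suc d) r) $ 0 \<cdot>\<^sub>v (E 0 *\<^sub>v col Ps 0)"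
      by (rule mult_mat_vec[OF E0c S.colP_carrier])
    also have "E 0 *\<^sub>v col Ps 0 = (Q *\<^sub>v col Ps 0) $ 0 \<cdot>\<^sub>v col P 0"
      unfolding E0 by (rule A.prim_vec(2)) simp_all
    also have "(Qs *\<^sub>v unit_vec (Suc d) r) $ 0 = Qs $$ (0, r)" using S.Q r by simp
    finally show ?thesis using r A.P by simp
  qed
  have "mat_trace (E 0 * Es 0) = (\<Sum>r<Suc d. (E 0 * Es 0) $$ (r, r))"
    unfolding mat_trace_def using E0c by (simp del: sum.lessThan_Suc)
  also have "\<dots> = (\<Sum>r<Suc d. (Q *\<^sub>v col Ps 0) $ 0 * (Qs $$ (0, r) * P $$ (r, 0)))"
    using diag by simp
  also have "\<dots> = (Q *\<^sub>v col Ps 0) $ 0 * (\<Sum>r<Suc d. Qs $$ (0, r) * P $$ (r, 0))"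
    by (rule sum_distrib_left[symmetric])
  also have "(\<Sum>r<Suc d. Qs $$ (0, r) * P $$ (r, 0)) = (Qs *\<^sub>v col P 0) $ 0"
    using S.Q A.P by (simp add: scalar_prod_def lessThan_atLeast0)
  finally show ?thesis .
qed

end


lemma smult_mat_vec: assumes N: "(N::'a::field mat) \<in> carrier_mat n n" and w: "w \<in> carrier_vec n"
  shows "(a \<cdot>\<^sub>m N) *\<^sub>v w = a \<cdot>\<^sub>v (N *\<^sub>v w)"
  using N w by (intro eq_vecI) (auto simp: mult_mat_vec_def scalar_prod_def sum_distrib_left ac_simps)

lemma prod_flip: "(\<Prod>j<(d::nat). f (d - j)) = (\<Prod>h\<in>{1..d}. (f h::'a::comm_monoid_mult))"
  by (rule prod.reindex_bij_witness[where i="\<lambda>h. d - h" and j="\<lambda>j. d - j"]) auto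

lemma eig_match:
  assumes sp: "spec d A P Q f" and i: "i \<le> d" and Ei: "Ei = prim_idem d A f i"
    and AE: "A * Ei = t \<cdot>\<^sub>m Ei"
  shows "t = f i"
proof -
  interpret spec d A P Q f by (rule sp)
  have il: "i < Suc d" using i by simp
  have Eic: "Ei \<in> carrier_mat (Suc d) (Suc d)" unfolding Ei using prim_vec(1)[OF i, of "0\<^sub>v (Suc d)"] by simp
  have Eicol: "Ei *\<^sub>v col P i = col P i"
  proof -
    have "Ei *\<^sub>v col P i = (Q *\<^sub>v col P i) $ i \<cdot>\<^sub>v col P i" unfolding Ei by (rule prim_vec(2)[OF i colP_carrier])
    also have "(Q *\<^sub>v col P i) $ i = 1" using QcolP[OF il] il by simp
    finally show ?thesis by simp
  qed
  have "(A * Ei) *\<^sub>v col P i = A *\<^sub>v (Ei *\<^sub>v col P i)" by (rule assoc_mult_mat_vec[OF M Eic colP_carrier])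
  also have "\<dots> = f i \<cdot>\<^sub>v col P i" unfolding Eicol by (rule Mcol[OF il])
  finally have 1: "(A * Ei) *\<^sub>v col P i = f i \<cdot>\<^sub>v col P i" .
  have "(t \<cdot>\<^sub>m Ei) *\<^sub>v col P i = t \<cdot>\<^sub>v col P i" unfolding smult_mat_vec[OF Eic colP_carrier] Eicol ..
  with 1 AE have "t \<cdot>\<^sub>v col P i = f i \<cdot>\<^sub>v col P i" by simp
  then show ?thesis by (rule smult_cancel[OF _ colP_carrier colP_nz[OF il]])
qed

theorem theorem23p7:
  fixes d :: nat and A As :: "'a::field mat" and E Es :: "nat \<Rightarrow> 'a mat"
    and th ths :: "nat \<Rightarrow> 'a"
  assumes "leonard_system d A As E Es"
    and "assoc_eigenvalues d A E th"
    and "assoc_eigenvalues d As Es ths"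
  shows "1 / mat_trace (E 0 * Es 0) =
    (\<Prod>h=1..d. th 0 - th h) * (\<Prod>h=1..d. ths 0 - ths h) /
    (\<Prod>i=1..d. second_split_seq d A As E Es th ths i)"
proof -
  have mfA: "mult_free d A" and mfS: "mult_free d As" and ioA: "idem_ordering d A E"
    and ioS: "idem_ordering d As Es"
    and c1: "\<forall>i\<le>d. \<forall>j\<le>d. (i > j + 1 \<or> j > i + 1) \<longrightarrow> E i * As * E j = 0\<^sub>m (Suc d) (Suc d)"
    and c3: "\<forall>i\<le>d. \<forall>j\<le>d. (i > j + 1 \<or> j > i + 1) \<longrightarrow> Es i * A * Es j = 0\<^sub>m (Suc d) (Suc d)"
    and c4: "\<forall>i\<le>d. \<forall>j\<le>d. (i = j + 1 \<or> j = i + 1) \<longrightarrow> Es i * A * Es j \<noteq> 0\<^sub>m (Suc d) (Suc d)"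
    using assms(1) unfolding leonard_system_def by blast+
  have Ac: "A \<in> carrier_mat (Suc d) (Suc d)" using mfA unfolding mult_free_def by blast
  have Asc: "As \<in> carrier_mat (Suc d) (Suc d)" using mfS unfolding mult_free_def by blast
  obtain f where finj: "inj_on f {0..d}" and fev: "\<forall>i\<le>d. eigenvalue A (f i)"
    and Ef: "\<forall>i\<le>d. E i = prim_idem d A f i"
    using ioA unfolding idem_ordering_def by blast
  obtain fs where fsinj: "inj_on fs {0..d}" and fsev: "\<forall>i\<le>d. eigenvalue As (fs i)"
    and Efs: "\<forall>i\<le>d. Es i = prim_idem d As fs i"
    using ioS unfolding idem_ordering_def by blast
  obtain P Q where PQ: "P \<in> carrier_mat (Suc d) (Suc d)" "Q \<in> carrier_mat (Suc d) (Suc d)"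
    "P * Q = 1\<^sub>m (Suc d)" "Q * P = 1\<^sub>m (Suc d)" "A * P = P * dmat (Suc d) f"
    using spectral_exists[OF Ac finj fev] by blast
  obtain Ps Qs where PQs: "Ps \<in> carrier_mat (Suc d) (Suc d)" "Qs \<in> carrier_mat (Suc d) (Suc d)"
    "Ps * Qs = 1\<^sub>m (Suc d)" "Qs * Ps = 1\<^sub>m (Suc d)" "As * Ps = Ps * dmat (Suc d) fs"
    using spectral_exists[OF Asc fsinj fsev] by blast
  have spA: "spec d A P Q f" by (unfold_locales; fact Ac PQ finj)
  have spS: "spec d As Ps Qs fs" by (unfold_locales; fact Asc PQs fsinj)
  interpret A: spec d A P Q f by (rule spA)
  interpret S: spec d As Ps Qs fs by (rule spS)
  have ent: "(Qs * A * Ps) $$ (k, l) = 0 \<longleftrightarrow> Es k * A * Es l = 0\<^sub>m (Suc d) (Suc d)" if kl: "k < Suc d" "l < Suc d" for k l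
  proof -
    have "(Qs * A * Ps) $$ (k, l) = (Qs *\<^sub>v (A *\<^sub>v col Ps l)) $ k"
      by (rule S.conj_entry(2)[OF Ac S.colP_carrier kl])
    moreover have "Es k * A * Es l = prim_idem d As fs k * A * prim_idem d As fs l" using Efs kl by simp
    moreover have "prim_idem d As fs k * A * prim_idem d As fs l = 0\<^sub>m (Suc d) (Suc d) \<longleftrightarrow> (Qs *\<^sub>v (A *\<^sub>v col Ps l)) $ k = 0"
      using kl by (intro S.EXE_zero[OF _ _ Ac]) simp_all
    ultimately show ?thesis by simp
  qed
  have entC: "(Q * As * P) $$ (k, l) = 0 \<longleftrightarrow> E k * As * E l = 0\<^sub>m (Suc d) (Suc d)" if kl: "k < Suc d" "l < Suc d" for k l
  proof -
    have "(Q * As * P) $$ (k, l) = (Q *\<^sub>v (As *\<^sub>v col P l)) $ k"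
      by (rule A.conj_entry(2)[OF Asc A.colP_carrier kl])
    moreover have "E k * As * E l = prim_idem d A f k * As * prim_idem d A f l" using Ef kl by simp
    moreover have "prim_idem d A f k * As * prim_idem d A f l = 0\<^sub>m (Suc d) (Suc d) \<longleftrightarrow> (Q *\<^sub>v (As *\<^sub>v col P l)) $ k = 0"
      using kl by (intro A.EXE_zero[OF _ _ Asc]) simp_all
    ultimately show ?thesis by simp
  qed
  have triB: "\<forall>k<Suc d. \<forall>l<Suc d. (k > l+1 \<or> l > k+1) \<longrightarrow> (Qs * A * Ps) $$ (k, l) = 0"
  proof (intro allI impI)
    fix k l assume k: "k < Suc d" and l: "l < Suc d" and far: "k > l+1 \<or> l > k+1"
    have "Es k * A * Es l = 0\<^sub>m (Suc d) (Suc d)" using c3[rule_format, of k l] k l far by simp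
    then show "(Qs * A * Ps) $$ (k, l) = 0" using ent[OF k l] by simp
  qed
  have subB: "\<forall>p<d. (Qs * A * Ps) $$ (Suc p, p) \<noteq> 0"
  proof (intro allI impI)
    fix p assume p: "p < d"
    have "Es (Suc p) * A * Es p \<noteq> 0\<^sub>m (Suc d) (Suc d)" using c4[rule_format, of "Suc p" p] p by simp
    then show "(Qs * A * Ps) $$ (Suc p, p) \<noteq> 0" using ent[of "Suc p" p] p by simp
  qed
  have triC: "\<forall>k<Suc d. \<forall>l<Suc d. (k > l+1 \<or> l > k+1) \<longrightarrow> (Q * As * P) $$ (k, l) = 0"
  proof (intro allI impI)
    fix k l assume k: "k < Suc d" and l: "l < Suc d" and far: "k > l+1 \<or> l > k+1"
    have "E k * As * E l = 0\<^sub>m (Suc d) (Suc d)" using c1[rule_format, of k l] k l far by simp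
    then show "(Q * As * P) $$ (k, l) = 0" using entC[OF k l] by simp
  qed
  have lsl: "LS d A P Q f As Ps Qs fs E Es"
    by (intro LS.intro LS_axioms.intro spA spS) (fact Ef Efs triB subB triC)+
  interpret LS d A P Q f As Ps Qs fs E Es by (rule lsl)
  have th_eq: "th i = f i" if i: "i \<le> d" for i
  proof -
    have "A * E i = th i \<cdot>\<^sub>m E i" using assms(2) i unfolding assoc_eigenvalues_def by blast
    moreover have "E i = prim_idem d A f i" using Ef i by blast
    ultimately show ?thesis by (intro eig_match[OF spA i])
  qed
  have ths_eq: "ths i = fs i" if i: "i \<le> d" for i
  proof -
    have "As * Es i = ths i \<cdot>\<^sub>m Es i" using assms(3) i unfolding assoc_eigenvalues_def by blast
    moreover have "Es i = prim_idem d As fs i" using Efs i by blast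
    ultimately show ?thesis by (intro eig_match[OF spS i])
  qed
  have split: "second_split_seq d A As E Es th ths i = phi i" if i: "i \<in> {1..d}" for i
  proof -
    have a: "1 \<le> i" "i \<le> d" using i by auto
    have "(\<lambda>j. th (d - j)) (i - 1) = f (d - (i - 1))" using th_eq by simp
    moreover have "ths i = fs i" using ths_eq a by simp
    ultimately show ?thesis unfolding second_split_seq_def by (rule split_val[OF a])
  qed
  have Phi: "(\<Prod>i=1..d. second_split_seq d A As E Es th ths i) = (\<Prod>i=1..d. phi i)"
    by (rule prod.cong) (use split in auto)
  have eta: "(\<Prod>h=1..d. th 0 - th h) = (\<Prod>j<d. f 0 - f (d - j))"
    unfolding prod_flip[of "\<lambda>h. f 0 - f h"] by (rule prod.cong) (use th_eq in auto)
  have etas: "(\<Prod>h=1..d. ths 0 - ths h) = (\<Prod>j<d. fs 0 - fs (d - j))"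
    unfolding prod_flip[of "\<lambda>h. fs 0 - fs h"] by (rule prod.cong) (use ths_eq in auto)
  have eta_nz: "(\<Prod>j<d. f 0 - f (d - j)) \<noteq> 0"
    unfolding prod_flip[of "\<lambda>h. f 0 - f h"] using finj by (auto simp: prod_zero_iff dest: inj_onD)
  have etas_nz: "(\<Prod>j<d. fs 0 - fs (d - j)) \<noteq> 0"
    unfolding prod_flip[of "\<lambda>h. fs 0 - fs h"] using fsinj by (auto simp: prod_zero_iff dest: inj_onD)
  define a where "a = (\<Prod>j<d. f 0 - f (d - j))"
  define b where "b = (\<Prod>j<d. fs 0 - fs (d - j))"
  define q where "q = (Q *\<^sub>v col Ps 0) $ 0 * (Qs *\<^sub>v col P 0) $ 0"
  have "1 / q = a * b / (b * (a * q))"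
  proof (cases "q = 0")
    case False
    then show ?thesis using eta_nz etas_nz unfolding a_def[symmetric] b_def[symmetric] by (simp add: field_simps)
  qed simp
  then show ?thesis
    unfolding Phi eta etas main_id trace_val a_def b_def q_def .
qed

end
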